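(* Consider the M/M/K queue with heterogeneous servers described in the context, represented with the token state descriptor. If $\lambda<\mu:=\sum_{l=1}^K\mu(t_l)$, its stationary distribution is: for $i<K$ and distinct $T_1,\dots,T_i$, $\pi((T_1,0,\dots,T_i,0))=\pi((0))\frac{\lambda^i(K-i)!}{K!\prod_{j=1}^i\sum_{l=1}^j\mu(T_l)}$; for $i=K$, $\pi((T_1,0,\dots,T_{K-1},0,T_K,n))=\pi((0))\frac{\lambda^K}{K!\prod_{j=1}^K\sum_{l=1}^j\mu(T_l)}\big(\frac{\lambda}{\mu}\big)^{n}$, $n\ge0$; all other configurations have probability $0$; $\pi((0))$ is the normalising constant.
   Context: Single customer class arriving as a Poisson process with rate $\lambda$; $K$ servers $t_1,\dots,t_K$, server $t_l$ serving at exponential rate $\mu(t_l)>0$. An arriving customer finding idle servers joins one of them uniformly at random; otherwise it waits in a FCFS queue, and a server becoming free takes the longest-waiting customer. Servers are identified with tokens; the state is $(0)$ or $(T_1,n_1,\dots,T_i,n_i)$, where $T_1,\dots,T_i$ are the busy servers ordered by arrival time of the customers they serve and $n_j$ is the number of waiting customers that arrived between the customers served by $T_j$ and $T_{j+1}$ (after the customer at $T_i$ for $j=i$); waiting customers exist only when all $K$ servers are busy, so $n_j=0$ for $j<K$. *)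

theory Defs
  imports "HOL-Analysis.Analysis"
begin

text \<open>Servers are t_0,...,t_{K-1}, identified with the naturals below K; service rates mu.
 A state (T_1,n_1,...,T_i,n_i) is the list [(T_1,n_1),...,(T_i,n_i)]; the empty list is state (0).\<close>

type_synonym qstate = "(nat \<times> nat) list"

definition valid_state :: "nat \<Rightarrow> qstate \<Rightarrow> bool" where
  "valid_state K s \<longleftrightarrow> distinct (map fst s) \<and> set (map fst s) \<subseteq> {..<K} \<and>
     (\<forall>j < length s. snd (s ! j) \<noteq> 0 \<longrightarrow> (j = length s - 1 \<and> length s = K))"

definition depart :: "nat \<Rightarrow> qstate \<Rightarrow> nat \<Rightarrow> qstate" where
  "depart K s j =
    (if length s = K \<and> s \<noteq> [] \<and> snd (last s) > 0 then
       (let s0 = butlast s @ [(fst (last s), 0)]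
        in take j s0 @ drop (Suc j) s0 @ [(fst (s ! j), snd (last s) - 1)])
     else take j s @ drop (Suc j) s)"

definition trans :: "real \<Rightarrow> (nat \<Rightarrow> real) \<Rightarrow> nat \<Rightarrow> qstate \<Rightarrow> (qstate \<times> real) list" where
  "trans lam mu K s =
     (if length s < K then
        map (\<lambda>t. (s @ [(t, 0)], lam / real (K - length s))) (filter (\<lambda>t. t \<notin> set (map fst s)) [0..<K])
      else [(butlast s @ [(fst (last s), Suc (snd (last s)))], lam)])
     @ map (\<lambda>j. (depart K s j, mu (fst (s ! j)))) [0..<length s]"

definition rate :: "real \<Rightarrow> (nat \<Rightarrow> real) \<Rightarrow> nat \<Rightarrow> qstate \<Rightarrow> qstate \<Rightarrow> real" where
  "rate lam mu K s s' = sum_list (map snd (filter (\<lambda>x. fst x = s') (trans lam mu K s)))"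

definition stationary :: "real \<Rightarrow> (nat \<Rightarrow> real) \<Rightarrow> nat \<Rightarrow> (qstate \<Rightarrow> real) \<Rightarrow> bool" where
  "stationary lam mu K p \<longleftrightarrow>
     (\<forall>s. p s \<ge> 0) \<and> (\<forall>s. \<not> valid_state K s \<longrightarrow> p s = 0) \<and> (p has_sum 1) UNIV \<and>
     (\<forall>s. valid_state K s \<longrightarrow>
        p s * (\<Sum>\<^sub>\<infinity>s'\<in>UNIV - {s}. rate lam mu K s s') =
        (\<Sum>\<^sub>\<infinity>s'\<in>UNIV - {s}. p s' * rate lam mu K s' s))"

text \<open>Unnormalised weight pi(s)/pi((0)) from the theorem.\<close>
definition weight :: "real \<Rightarrow> (nat \<Rightarrow> real) \<Rightarrow> nat \<Rightarrow> qstate \<Rightarrow> real" where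
  "weight lam mu K s =
     (let i = length s;
          P = (\<Prod>j<i. \<Sum>l\<le>j. mu (fst (s ! l)));
          m = (\<Sum>l<K. mu l)
      in if i < K then lam ^ i * fact (K - i) / (fact K * P)
         else lam ^ K / (fact K * P) * (lam / m) ^ snd (last s))"

end

theory Submission
  imports Defs
begin


definition Zs :: "qstate \<Rightarrow> bool" where "Zs s \<longleftrightarrow> (\<forall>p\<in>set s. snd p = 0)"

lemma valid_iff:
  "valid_state K s \<longleftrightarrow> distinct (map fst s) \<and> set (map fst s) \<subseteq> {..<K} \<and> Zs (butlast s) \<and>
     (s \<noteq> [] \<longrightarrow> length s \<noteq> K \<longrightarrow> snd (last s) = 0)"
proof
  assume v: "valid_state K s"
  have z: "Zs (butlast s)"
    unfolding Zs_def
  proof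
    fix p assume "p \<in> set (butlast s)"
    then obtain j where j: "j < length s - 1" "p = butlast s ! j" by (auto simp: in_set_conv_nth)
    then have "p = s ! j" by (simp add: nth_butlast)
    have "j < length s" "j \<noteq> length s - 1" using j by auto
    with v \<open>p = s ! j\<close> show "snd p = 0" unfolding valid_state_def by blast
  qed
  have "s \<noteq> [] \<longrightarrow> length s \<noteq> K \<longrightarrow> snd (last s) = 0"
    using v unfolding valid_state_def by (auto simp: last_conv_nth)
  with v z show "distinct (map fst s) \<and> set (map fst s) \<subseteq> {..<K} \<and> Zs (butlast s) \<and>
     (s \<noteq> [] \<longrightarrow> length s \<noteq> K \<longrightarrow> snd (last s) = 0)" unfolding valid_state_def by auto
next
  assume a: "distinct (map fst s) \<and> set (map fst s) \<subseteq> {..<K} \<and> Zs (butlast s) \<and>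
     (s \<noteq> [] \<longrightarrow> length s \<noteq> K \<longrightarrow> snd (last s) = 0)"
  have "\<forall>j < length s. snd (s ! j) \<noteq> 0 \<longrightarrow> (j = length s - 1 \<and> length s = K)"
  proof (intro allI impI)
    fix j assume j: "j < length s" and nz: "snd (s ! j) \<noteq> 0"
    show "j = length s - 1 \<and> length s = K"
    proof (cases "j = length s - 1")
      case True
      have "s \<noteq> []" using j by auto
      then have "s ! j = last s" using True by (simp add: last_conv_nth)
      with a nz j show ?thesis using True by auto
    next
      case False
      have jb: "j < length (butlast s)" using j False by simp
      then have "butlast s ! j \<in> set (butlast s)" by (rule nth_mem)
      moreover have "butlast s ! j = s ! j" using jb by (simp add: nth_butlast)
      ultimately have "s ! j \<in> set (butlast s)" by simp
      with a nz show ?thesis unfolding Zs_def by auto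
    qed
  qed
  with a show "valid_state K s" unfolding valid_state_def by blast
qed

lemma valid_len: "valid_state K s \<Longrightarrow> length s \<le> K"
proof -
  assume v: "valid_state K s"
  then have "distinct (map fst s)" "set (map fst s) \<subseteq> {..<K}" by (auto simp: valid_state_def)
  then have "card (set (map fst s)) \<le> K" using card_mono[of "{..<K}"] by fastforce
  with \<open>distinct (map fst s)\<close> show ?thesis using distinct_card[of "map fst s"] by simp
qed

lemma valid_full_set: "valid_state K s \<Longrightarrow> length s = K \<Longrightarrow> set (map fst s) = {..<K}"
proof -
  assume v: "valid_state K s" "length s = K"
  then have d: "distinct (map fst s)" "set (map fst s) \<subseteq> {..<K}" by (auto simp: valid_state_def)
  then have "card (set (map fst s)) = K" using v distinct_card[of "map fst s"] by simp
  with d show ?thesis by (metis card_lessThan card_subset_eq finite_lessThan)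
qed

lemma valid_Zs: "valid_state K s \<Longrightarrow> (length s < K \<or> s = [] \<or> snd (last s) = 0) \<Longrightarrow> Zs s"
proof -
  assume v: "valid_state K s" and h: "length s < K \<or> s = [] \<or> snd (last s) = 0"
  show "Zs s"
  proof (cases "s = []")
    case True then show ?thesis by (simp add: Zs_def)
  next
    case False
    then have "s = butlast s @ [last s]" by simp
    moreover have "snd (last s) = 0" using v h False by (auto simp: valid_iff)
    moreover have "Zs (butlast s)" using v by (simp add: valid_iff)
    ultimately show ?thesis unfolding Zs_def
    proof (intro ballI)
      fix p assume s: "s = butlast s @ [last s]" and l: "snd (last s) = 0" and z: "\<forall>p\<in>set (butlast s). snd p = 0"
        and p: "p \<in> set s"
      then have "p \<in> set (butlast s @ [last s])" by simp
      with l z show "snd p = 0" by auto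
    qed
  qed
qed

lemma valid_of_Zs: "distinct (map fst s) \<Longrightarrow> set (map fst s) \<subseteq> {..<K} \<Longrightarrow> Zs s \<Longrightarrow> valid_state K s"
  unfolding valid_iff Zs_def by (auto dest: in_set_butlastD)

locale Q =
  fixes lam :: real and mu :: "nat \<Rightarrow> real" and K :: nat
  assumes K1: "K \<ge> 1" and lampos: "lam > 0" and mupos: "\<And>l. l < K \<Longrightarrow> mu l > 0"
    and stab: "lam < (\<Sum>l<K. mu l)"
begin

definition labels :: "qstate \<Rightarrow> (nat + nat) list" where
  "labels s = (if length s < K then map Inl (filter (\<lambda>t. t \<notin> set (map fst s)) [0..<K]) else [Inl 0])
      @ map Inr [0..<length s]"

definition tgt :: "qstate \<Rightarrow> nat + nat \<Rightarrow> qstate" where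
  "tgt s l = (case l of Inl t \<Rightarrow> (if length s < K then s @ [(t, 0)]
        else butlast s @ [(fst (last s), Suc (snd (last s)))]) | Inr j \<Rightarrow> depart K s j)"

definition rho :: "qstate \<Rightarrow> nat + nat \<Rightarrow> real" where
  "rho s l = (case l of Inl t \<Rightarrow> (if length s < K then lam / real (K - length s) else lam)
      | Inr j \<Rightarrow> mu (fst (s ! j)))"

lemma trans_eq: "trans lam mu K s = map (\<lambda>l. (tgt s l, rho s l)) (labels s)"
  by (simp add: trans_def labels_def tgt_def rho_def comp_def)

lemma distinct_labels: "distinct (labels s)"
  by (auto simp: labels_def distinct_map intro: inj_onI)

lemma rate_eq: "rate lam mu K s s' = (\<Sum>l\<in>{l\<in>set (labels s). tgt s l = s'}. rho s l)"
proof -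
  have "rate lam mu K s s' = sum_list (map (rho s) (filter (\<lambda>l. tgt s l = s') (labels s)))"
    unfolding rate_def trans_eq by (simp add: filter_map comp_def)
  also have "\<dots> = sum (rho s) (set (filter (\<lambda>l. tgt s l = s') (labels s)))"
    by (rule sum_list_distinct_conv_sum_set) (simp add: distinct_labels)
  finally show ?thesis by simp
qed


definition busy :: "qstate \<Rightarrow> real" where "busy s = (\<Sum>j<length s. mu (fst (s ! j)))"
definition outr :: "qstate \<Rightarrow> real" where "outr s = (\<Sum>l\<in>set (labels s). rho s l)"
definition msr :: "qstate \<Rightarrow> nat" where "msr s = (if s = [] then 0 else length s + snd (last s))"

lemma rate_nonself: "s' \<notin> tgt s ` set (labels s) \<Longrightarrow> rate lam mu K s s' = 0"
  unfolding rate_eq by (rule sum.neutral) auto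

lemma depA: "length s = K \<Longrightarrow> 0 < snd (last s) \<Longrightarrow>
  depart K s j = take j (butlast s @ [(fst (last s), 0)]) @ drop (Suc j) (butlast s @ [(fst (last s), 0)])
      @ [(fst (s ! j), snd (last s) - 1)]"
  using K1 by (auto simp: depart_def Let_def)

lemma depB: "\<not> (length s = K \<and> 0 < snd (last s)) \<Longrightarrow> depart K s j = take j s @ drop (Suc j) s"
  by (auto simp: depart_def)

lemma Zs_take_drop: "Zs s \<Longrightarrow> Zs (take j s @ drop (Suc j) s)"
  unfolding Zs_def by (auto dest: in_set_takeD in_set_dropD)

lemma msr_Zs: "Zs s \<Longrightarrow> msr s = length s"
  unfolding msr_def Zs_def by auto

lemma depart_msr:
  assumes v: "valid_state K s" and j: "j < length s"
  shows "msr (depart K s j) < msr s"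
proof (cases "length s = K \<and> 0 < snd (last s)")
  case True
  then have ne: "s \<noteq> []" using K1 by auto
  define s0 where "s0 = butlast s @ [(fst (last s), 0)]"
  have ls0: "length s0 = K" using True ne K1 by (simp add: s0_def)
  have d: "depart K s j = (take j s0 @ drop (Suc j) s0) @ [(fst (s ! j), snd (last s) - 1)]"
    using True by (simp add: depA s0_def)
  have "length (take j s0 @ drop (Suc j) s0) = K - 1" using ls0 j True by simp
  then have "length (depart K s j) = K" using d K1 by (simp del: length_append) (simp add: length_append)
  moreover have "last (depart K s j) = (fst (s ! j), snd (last s) - 1)" using d by simp
  ultimately have "msr (depart K s j) = K + (snd (last s) - 1)" using d by (simp add: msr_def)
  then show ?thesis using True ne K1 by (simp add: msr_def)
next
  case False
  then have z: "Zs s" using v valid_len[OF v] by (intro valid_Zs) auto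
  have "depart K s j = take j s @ drop (Suc j) s" using False by (rule depB)
  with z j show ?thesis by (simp add: msr_Zs Zs_take_drop)
qed

lemma labels_cases: "l \<in> set (labels s) \<Longrightarrow>
   (\<exists>t. l = Inl t \<and> (length s < K \<longrightarrow> t < K \<and> t \<notin> set (map fst s)) \<and> (\<not> length s < K \<longrightarrow> t = 0))
    \<or> (\<exists>j. l = Inr j \<and> j < length s)"
  unfolding labels_def by (auto split: if_splits)

lemma tgt_ne:
  assumes v: "valid_state K s" and l: "l \<in> set (labels s)"
  shows "tgt s l \<noteq> s"
  using labels_cases[OF l]
proof
  assume "\<exists>t. l = Inl t \<and> (length s < K \<longrightarrow> t < K \<and> t \<notin> set (map fst s)) \<and> (\<not> length s < K \<longrightarrow> t = 0)"
  then obtain t where t: "l = Inl t" by blast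
  show ?thesis
  proof (cases "length s < K")
    case True then show ?thesis using t by (auto simp: tgt_def)
  next
    case False
    then have "s \<noteq> []" using K1 by auto
    have "last (tgt s l) = (fst (last s), Suc (snd (last s)))" using t False by (simp add: tgt_def)
    then show ?thesis by (metis n_not_Suc_n snd_conv)
  qed
next
  assume "\<exists>j. l = Inr j \<and> j < length s"
  then obtain j where "l = Inr j" "j < length s" by blast
  then have "tgt s l = depart K s j" by (simp add: tgt_def)
  moreover have "msr (depart K s j) < msr s" using \<open>j < length s\<close> by (rule depart_msr[OF v])
  ultimately show ?thesis by (metis less_irrefl)
qed

lemma rho_pos:
  assumes v: "valid_state K s" and l: "l \<in> set (labels s)"
  shows "rho s l > 0"
  using labels_cases[OF l]
proof
  assume "\<exists>t. l = Inl t \<and> (length s < K \<longrightarrow> t < K \<and> t \<notin> set (map fst s)) \<and> (\<not> length s < K \<longrightarrow> t = 0)"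
  then obtain t where t: "l = Inl t" by blast
  then show ?thesis using lampos by (auto simp: rho_def)
next
  assume "\<exists>j. l = Inr j \<and> j < length s"
  then obtain j where j: "l = Inr j" "j < length s" by blast
  then have "fst (s ! j) \<in> set (map fst s)" by auto
  then have "fst (s ! j) < K" using v by (auto simp: valid_state_def)
  then show ?thesis using j mupos by (auto simp: rho_def)
qed

lemma rate_nonneg: "valid_state K s \<Longrightarrow> rate lam mu K s s' \<ge> 0"
  unfolding rate_eq by (rule sum_nonneg) (auto dest: rho_pos intro: less_imp_le)

lemma rate_pos: "valid_state K s \<Longrightarrow> l \<in> set (labels s) \<Longrightarrow> rate lam mu K s (tgt s l) > 0"
  unfolding rate_eq
  apply (rule sum_pos2[where i = l])
     apply (auto intro: rho_pos less_imp_le)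
  done

lemma out_has_sum:
  assumes v: "valid_state K t"
  shows "((\<lambda>s. if s = t then 0 else rate lam mu K t s) has_sum outr t) UNIV"
proof (rule has_sum_finite_neutralI[where B = "tgt t ` set (labels t)"])
  show "finite (tgt t ` set (labels t))" by simp
  show "\<And>x. x \<in> UNIV - tgt t ` set (labels t) \<Longrightarrow> (if x = t then 0 else rate lam mu K t x) = 0"
    using rate_nonself by auto
  have nt: "t \<notin> tgt t ` set (labels t)"
  proof
    assume "t \<in> tgt t ` set (labels t)"
    then obtain l where "l \<in> set (labels t)" "t = tgt t l" by blast
    then show False using tgt_ne[OF v, of l] by simp
  qed
  have "outr t = (\<Sum>y\<in>tgt t ` set (labels t). \<Sum>l\<in>{l \<in> set (labels t). tgt t l = y}. rho t l)"
    unfolding outr_def by (rule sum.image_gen) simp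
  also have "\<dots> = (\<Sum>x\<in>tgt t ` set (labels t). if x = t then 0 else rate lam mu K t x)"
  proof (intro sum.cong refl)
    fix x assume "x \<in> tgt t ` set (labels t)"
    then have "x \<noteq> t" using nt by blast
    then show "(\<Sum>l\<in>{l \<in> set (labels t). tgt t l = x}. rho t l) = (if x = t then 0 else rate lam mu K t x)"
      by (simp add: rate_eq)
  qed
  finally show "outr t = (\<Sum>x\<in>tgt t ` set (labels t). if x = t then 0 else rate lam mu K t x)" .
qed simp

lemma outr_eq:
  assumes v: "valid_state K s"
  shows "outr s = lam + busy s"
proof -
  define A where "A = (if length s < K then map Inl (filter (\<lambda>t. t \<notin> set (map fst s)) [0..<K]) else [Inl 0 :: nat + nat])"
  have L: "set (labels s) = set A \<union> Inr ` {..<length s}"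
    by (auto simp: labels_def A_def)
  have "outr s = sum (rho s) (set A) + sum (rho s) (Inr ` {..<length s})"
    unfolding outr_def L by (rule sum.union_disjoint) (auto simp: A_def)
  moreover have "sum (rho s) (Inr ` {..<length s}) = busy s"
    by (subst sum.reindex) (auto simp: busy_def rho_def)
  moreover have "sum (rho s) (set A) = lam"
  proof (cases "length s < K")
    case True
    let ?X = "{t. t < K \<and> t \<notin> set (map fst s)}"
    have "set A = Inl ` ?X" using True by (auto simp: A_def)
    then have "sum (rho s) (set A) = sum (rho s) (Inl ` ?X)" by simp
    also have "\<dots> = (\<Sum>t\<in>?X. lam / real (K - length s))"
      using True by (subst sum.reindex) (auto simp: rho_def)
    also have "\<dots> = real (card ?X) * (lam / real (K - length s))" by simp
    also have "card ?X = K - length s"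
    proof -
      have "?X = {..<K} - set (map fst s)" by auto
      moreover have "set (map fst s) \<subseteq> {..<K}" "distinct (map fst s)" using v by (auto simp: valid_state_def)
      ultimately have "card ?X = card {..<K} - card (set (map fst s))"
        by (simp add: card_Diff_subset)
      also have "card (set (map fst s)) = length s"
        using distinct_card[OF \<open>distinct (map fst s)\<close>] by simp
      finally show ?thesis by simp
    qed
    finally have "sum (rho s) (set A) = real (K - length s) * (lam / real (K - length s))" .
    moreover have "real (K - length s) \<noteq> 0" using True by simp
    ultimately show ?thesis by simp
  next
    case False then show ?thesis by (simp add: A_def rho_def)
  qed
  ultimately show ?thesis by simp
qed

lemma busy_le: "valid_state K s \<Longrightarrow> busy s \<le> (\<Sum>l<K. mu l)"
proof -
  assume v: "valid_state K s"
  have "busy s = sum_list (map mu (map fst s))"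
    unfolding busy_def by (simp add: sum_list_sum_nth atLeast0LessThan)
  also have "\<dots> = sum mu (set (map fst s))"
    using v by (intro sum_list_distinct_conv_sum_set) (auto simp: valid_state_def)
  also have "\<dots> \<le> sum mu {..<K}"
    using v by (intro sum_mono2) (auto simp: valid_state_def intro: less_imp_le mupos)
  finally show ?thesis .
qed

end


lemma abstract_zero:
  fixes d :: "'a \<Rightarrow> real" and R :: "'a \<Rightarrow> 'a \<Rightarrow> real" and out :: "'a \<Rightarrow> real"
  assumes dsum: "d summable_on UNIV"
    and d0: "\<And>s. s \<notin> V \<Longrightarrow> d s = 0"
    and Rnn: "\<And>t s. t \<in> V \<Longrightarrow> R t s \<ge> 0"
    and Rsum: "\<And>t. t \<in> V \<Longrightarrow> (R t has_sum out t) UNIV"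
    and Rb: "\<And>t. t \<in> V \<Longrightarrow> out t \<le> C"
    and bal: "\<And>s. s \<in> V \<Longrightarrow> d s * out s = (\<Sum>\<^sub>\<infinity>t. d t * R t s)"
    and s: "d s = 0" and t: "t \<in> V" "R t s > 0"
  shows "d t = 0"
proof -
  have ad: "(\<lambda>t. \<bar>d t\<bar>) summable_on UNIV"
    using summable_on_iff_abs_summable_on_real[THEN iffD1, OF dsum] by simp
  have outnn: "out x \<ge> 0" if "x \<in> V" for x
    using has_sum_nonneg[OF Rsum[OF that]] Rnn[OF that] by blast
  have Rle: "R x y \<le> out x" if "x \<in> V" for x y
  proof (rule has_sum_mono_neutral[where A = "{y}" and B = UNIV])
    show "(R x has_sum R x y) {y}" by (rule has_sum_finiteI) auto
  qed (use Rsum[OF that] Rnn[OF that] in auto)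
  have C0: "C \<ge> 0" using outnn[OF t(1)] Rb[OF t(1)] by linarith
  define G where "G = (\<lambda>(x, y). if x \<in> V then \<bar>d x\<bar> * R x y else 0)"
  define a where "a x = \<bar>d x\<bar> * out x" for x
  have Gnn: "G (x, y) \<ge> 0" for x y using Rnn by (auto simp: G_def)
  have Ghs: "((\<lambda>y. G (x, y)) has_sum a x) UNIV" for x
  proof (cases "x \<in> V")
    case True then show ?thesis unfolding G_def a_def using has_sum_cmult_right[OF Rsum[OF True]] by simp
  next
    case False then show ?thesis unfolding G_def a_def by (simp add: d0)
  qed
  have Gle: "G (x, y) \<le> C * \<bar>d x\<bar>" for x y
  proof (cases "x \<in> V")
    case True
    have "\<bar>d x\<bar> * R x y \<le> \<bar>d x\<bar> * C" using Rle[OF True, of y] Rb[OF True]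
      by (intro mult_left_mono) auto
    then show ?thesis using True by (simp add: G_def mult.commute)
  next
    case False then show ?thesis using C0 by (simp add: G_def)
  qed
  have Cd: "(\<lambda>x. C * \<bar>d x\<bar>) summable_on UNIV" using ad by (rule summable_on_cmult_right)
  have asum: "a summable_on UNIV"
  proof (rule summable_on_comparison_test[OF Cd])
    fix x
    show "a x \<le> C * \<bar>d x\<bar>"
    proof (cases "x \<in> V")
      case True
      have "\<bar>d x\<bar> * out x \<le> \<bar>d x\<bar> * C" by (rule mult_left_mono[OF Rb[OF True] abs_ge_zero])
      then show ?thesis by (simp add: a_def mult.commute)
    next
      case False then show ?thesis by (simp add: a_def d0)
    qed
    show "0 \<le> a x"
    proof (cases "x \<in> V")
      case True then show ?thesis unfolding a_def by (intro mult_nonneg_nonneg abs_ge_zero outnn)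
    next
      case False then show ?thesis by (simp add: a_def d0)
    qed
  qed
  have Gsum: "G summable_on UNIV \<times> UNIV"
    using summable_on_SigmaI[where A = UNIV and B = "\<lambda>_. UNIV" and f = G, OF Ghs asum] Gnn by auto
  have Gcol: "(\<lambda>x. G (x, y)) summable_on UNIV" for y
    by (rule summable_on_comparison_test[OF Cd]) (use Gle Gnn in auto)
  define b where "b = (\<lambda>y. \<Sum>\<^sub>\<infinity>x. G (x, y))"
  have Gsw: "(\<lambda>(y, x). G (x, y)) summable_on UNIV \<times> UNIV"
    using Gsum summable_on_swap[of G UNIV UNIV] by simp
  have bsum: "b summable_on UNIV"
    using summable_on_Sigma_banach[OF Gsw[unfolded UNIV_Times_UNIV[symmetric]]] by (simp add: b_def)
  have "(\<Sum>\<^sub>\<infinity>x. \<Sum>\<^sub>\<infinity>y. G (x, y)) = (\<Sum>\<^sub>\<infinity>y. \<Sum>\<^sub>\<infinity>x. G (x, y))"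
    by (rule infsum_swap_banach[where f = "\<lambda>x y. G (x, y)"]) (use Gsum in simp)
  moreover have "(\<lambda>x. \<Sum>\<^sub>\<infinity>y. G (x, y)) = a" using Ghs by (intro ext infsumI)
  ultimately have eqab: "(\<Sum>\<^sub>\<infinity>x. a x) = (\<Sum>\<^sub>\<infinity>y. b y)"
    by (simp add: b_def)
  have ab: "a y \<le> b y" for y
  proof (cases "y \<in> V")
    case True
    have eqn: "(\<lambda>x. norm (d x * R x y)) = (\<lambda>x. G (x, y))"
    proof
      fix x show "norm (d x * R x y) = G (x, y)"
        using Rnn[of x y] d0[of x] by (cases "x \<in> V") (auto simp: G_def abs_mult)
    qed
    have "a y = \<bar>d y * out y\<bar>" using outnn[OF True] by (simp add: a_def abs_mult)
    also have "\<dots> = norm (\<Sum>\<^sub>\<infinity>x. d x * R x y)" using bal[OF True] by simp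
    also have "\<dots> \<le> (\<Sum>\<^sub>\<infinity>x. norm (d x * R x y))"
      by (rule norm_infsum_bound) (unfold eqn, rule Gcol)
    also have "\<dots> = b y" unfolding eqn b_def by (rule refl)
    finally show ?thesis .
  next
    case False
    then have "a y = 0" by (simp add: a_def d0)
    moreover have "b y \<ge> 0" unfolding b_def by (rule infsum_nonneg) (rule Gnn)
    ultimately show ?thesis by simp
  qed
  have hs: "((\<lambda>y. b y + - a y) has_sum ((\<Sum>\<^sub>\<infinity>y. b y) + - (\<Sum>\<^sub>\<infinity>x. a x))) UNIV"
    by (intro has_sum_add has_sum_uminus[THEN iffD2]) (use bsum asum in auto)
  then have hs0: "((\<lambda>y. b y + - a y) has_sum 0) UNIV" using eqab by simp
  have "b s + - a s = 0"
    by (rule nonneg_infsum_le_0D[where A = UNIV]) (use hs0 ab in \<open>auto simp: infsumI intro: has_sum_imp_summable\<close>)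
  moreover have "a s = 0" using s by (simp add: a_def)
  ultimately have "b s = 0" by simp
  then have "G (t, s) = 0"
    by (intro nonneg_infsum_le_0D[where A = UNIV and f = "\<lambda>x. G (x, s)"]) (use Gcol Gnn in \<open>auto simp: b_def\<close>)
  then show ?thesis using t by (simp add: G_def)
qed



context Q begin

definition Pl :: "nat list \<Rightarrow> real" where "Pl v = (\<Prod>j<length v. \<Sum>l\<le>j. mu (v ! l))"

lemma Pl_Nil[simp]: "Pl [] = 1" by (simp add: Pl_def)

lemma Pl_snoc: "Pl (v @ [a]) = Pl v * (sum_list (map mu v) + mu a)"
proof -
  have "Pl (v @ [a]) = (\<Prod>j<length v. \<Sum>l\<le>j. mu ((v @ [a]) ! l)) * (\<Sum>l\<le>length v. mu ((v @ [a]) ! l))"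
    by (simp add: Pl_def)
  also have "(\<Prod>j<length v. \<Sum>l\<le>j. mu ((v @ [a]) ! l)) = Pl v"
    unfolding Pl_def by (intro prod.cong sum.cong refl) (auto simp: nth_append)
  also have "(\<Sum>l\<le>length v. mu ((v @ [a]) ! l)) = (\<Sum>l<length v. mu ((v @ [a]) ! l)) + mu a"
    by (simp add: lessThan_Suc_atMost[symmetric] nth_append)
  also have "(\<Sum>l<length v. mu ((v @ [a]) ! l)) = sum_list (map mu v)"
    by (simp add: sum_list_sum_nth atLeast0LessThan nth_append)
  finally show ?thesis .
qed

lemma sum_list_pos: "set v \<subseteq> {..<K} \<Longrightarrow> sum_list (map mu v) \<ge> 0"
  by (induction v) (auto intro: less_imp_le mupos add_nonneg_nonneg)

lemma Pl_pos: "set v \<subseteq> {..<K} \<Longrightarrow> Pl v > 0"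
proof (induction v rule: rev_induct)
  case Nil then show ?case by simp
next
  case (snoc a v)
  then have "sum_list (map mu v) \<ge> 0" "mu a > 0" "Pl v > 0" using sum_list_pos mupos by auto
  then show ?case by (simp add: Pl_snoc)
qed

lemma sum_list_ins: "sum_list (map mu (take j v @ y # drop j v)) = sum_list (map mu v) + mu y"
proof -
  have "sum_list (map mu v) = sum_list (map mu (take j v)) + sum_list (map mu (drop j v))"
    by (metis append_take_drop_id map_append sum_list_append)
  then show ?thesis by simp
qed

lemma frac_help:
  fixes P A c :: real
  assumes "P > 0" "A > 0" "c > 0"
  shows "1 / (P * (A + c)) + c / (P * A * (A + c)) = 1 / (P * A)"
proof -
  have e1: "1 / (P * (A + c)) = A / (P * A * (A + c))" using assms by simp
  have e2: "A / (P * A * (A + c)) + c / (P * A * (A + c)) = (A + c) / (P * A * (A + c))"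
    by (simp add: add_divide_distrib)
  have e3: "(A + c) / (P * A * (A + c)) = 1 / (P * A)" using assms by simp
  show ?thesis unfolding e1 e2 e3 ..
qed

lemma tele:
  assumes "set v \<subseteq> {..<K}" and "y < K"
  shows "(\<Sum>j\<le>length v. mu y / Pl (take j v @ y # drop j v)) = 1 / Pl v"
  using assms(1)
proof (induction v rule: rev_induct)
  case Nil
  have "Pl [y] = mu y" by (simp add: Pl_def)
  then show ?case using mupos[OF assms(2)] by simp
next
  case (snoc a v)
  let ?L = "length v"
  define T where "T = sum_list (map mu v)"
  have sv: "set v \<subseteq> {..<K}" and aK: "a < K" using snoc.prems by auto
  have T0: "T \<ge> 0" unfolding T_def by (rule sum_list_pos[OF sv])
  have ma: "mu a > 0" and my: "mu y > 0" using mupos aK assms(2) by auto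
  have P0: "Pl v > 0" by (rule Pl_pos[OF sv])
  have ins: "take j (v @ [a]) @ y # drop j (v @ [a]) = (take j v @ y # drop j v) @ [a]" if "j \<le> ?L" for j
    using that by simp
  have Pins: "Pl (take j (v @ [a]) @ y # drop j (v @ [a])) = Pl (take j v @ y # drop j v) * (T + mu y + mu a)"
    if "j \<le> ?L" for j
    using that by (simp only: ins Pl_snoc sum_list_ins T_def)
  have last: "take (Suc ?L) (v @ [a]) @ y # drop (Suc ?L) (v @ [a]) = (v @ [a]) @ [y]" by simp
  have "(\<Sum>j\<le>length (v @ [a]). mu y / Pl (take j (v @ [a]) @ y # drop j (v @ [a])))
      = (\<Sum>j\<le>?L. mu y / Pl (take j (v @ [a]) @ y # drop j (v @ [a])))
        + mu y / Pl ((v @ [a]) @ [y])"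
    by (simp only: length_append_singleton sum.atMost_Suc last)
  also have "(\<Sum>j\<le>?L. mu y / Pl (take j (v @ [a]) @ y # drop j (v @ [a])))
      = (\<Sum>j\<le>?L. mu y / (Pl (take j v @ y # drop j v) * (T + mu y + mu a)))"
    by (rule sum.cong[OF refl], subst Pins, simp_all)
  also have "\<dots> = (\<Sum>j\<le>?L. mu y / Pl (take j v @ y # drop j v)) / (T + mu y + mu a)"
    by (simp add: sum_divide_distrib divide_divide_eq_left)
  also have "\<dots> = 1 / (Pl v * (T + mu y + mu a))" using snoc.IH[OF sv] by simp
  also have "Pl ((v @ [a]) @ [y]) = Pl v * (T + mu a) * (T + mu a + mu y)"
    by (simp only: Pl_snoc T_def map_append sum_list_append) simp
  also have "1 / Pl (v @ [a]) = 1 / (Pl v * (T + mu a))" by (simp add: Pl_snoc T_def)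
  moreover have "1 / (Pl v * (T + mu y + mu a)) + mu y / (Pl v * (T + mu a) * (T + mu a + mu y))
      = 1 / (Pl v * (T + mu a))"
  proof -
    have e: "T + mu y + mu a = T + mu a + mu y" by simp
    show ?thesis unfolding e by (rule frac_help) (use P0 T0 ma my in auto)
  qed
  ultimately show ?case by simp
qed

end


definition setn :: "qstate \<Rightarrow> nat \<Rightarrow> qstate" where "setn l n = butlast l @ [(fst (last l), n)]"

lemma map_snoc: "s \<noteq> [] \<Longrightarrow> map f s = map f (butlast s) @ [f (last s)]"
  by (induction s) auto

lemma setn_simps:
  assumes "l \<noteq> []"
  shows "map fst (setn l n) = map fst l" "length (setn l n) = length l" "last (setn l n) = (fst (last l), n)"
    "butlast (setn l n) = butlast l" "setn l n \<noteq> []"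
proof -
  have "map fst l = map fst (butlast l) @ [fst (last l)]" using assms by (rule map_snoc)
  then show "map fst (setn l n) = map fst l" by (simp add: setn_def)
  show "length (setn l n) = length l" using assms by (simp add: setn_def)
qed (auto simp: setn_def)

lemma snoc_last_pair: "s \<noteq> [] \<Longrightarrow> snd (last s) = m \<Longrightarrow> butlast s @ [(fst (last s), m)] = s"
proof -
  assume ne: "s \<noteq> []" and h: "snd (last s) = m"
  have "(fst (last s), m) = last s" using h by (simp add: prod_eq_iff)
  then show ?thesis using ne by simp
qed

lemma Zs_ins: "Zs s \<Longrightarrow> Zs (take j s @ (x, 0) # drop j s)"
  unfolding Zs_def by (auto dest: in_set_takeD in_set_dropD)

lemma Zs_butlast: "Zs s \<Longrightarrow> Zs (butlast s)"
  unfolding Zs_def by (auto dest: in_set_butlastD)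

lemma distinct_ins: "distinct (x # u) \<Longrightarrow> distinct (take j u @ x # drop j u)"
proof -
  assume d: "distinct (x # u)"
  have "mset (take j u @ x # drop j u) = mset (x # u)"
  proof -
    have "mset (take j u) + mset (drop j u) = mset u" by (metis append_take_drop_id mset_append)
    then show ?thesis by simp
  qed
  then show ?thesis using d mset_eq_imp_distinct_iff by blast
qed

lemma set_ins: "set (take j u @ x # drop j u) = insert x (set u)"
proof -
  have "set (take j u) \<union> set (drop j u) = set u" by (metis append_take_drop_id set_append)
  then show ?thesis by auto
qed

lemma map_fst_ins: "map fst (take j s @ (x, y) # drop j s) = take j (map fst s) @ x # drop j (map fst s)"
  by (simp add: take_map drop_map)

context Q begin

lemma fwd_dep_small:
  assumes v: "valid_state K s" and len: "length s < K" and x: "x < K" and xn: "x \<notin> set (map fst s)"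
    and j: "j \<le> length s"
  shows "valid_state K (take j s @ (x, 0) # drop j s) \<and> Inr j \<in> set (labels (take j s @ (x, 0) # drop j s))
     \<and> tgt (take j s @ (x, 0) # drop j s) (Inr j) = s \<and> rho (take j s @ (x, 0) # drop j s) (Inr j) = mu x"
proof -
  let ?s = "take j s @ (x, 0) # drop j s"
  have z: "Zs s" using v len by (intro valid_Zs) auto
  have z': "Zs ?s" using z by (rule Zs_ins)
  have d: "distinct (map fst s)" "set (map fst s) \<subseteq> {..<K}" using v by (auto simp: valid_state_def)
  have "distinct (map fst ?s)" unfolding map_fst_ins using d xn by (intro distinct_ins) simp
  moreover have "set (map fst ?s) \<subseteq> {..<K}" unfolding map_fst_ins set_ins using d x by auto
  ultimately have v': "valid_state K ?s" using z' by (rule valid_of_Zs)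
  have lab: "Inr j \<in> set (labels ?s)" using j by (auto simp: labels_def)
  have "last ?s \<in> set ?s" by (rule last_in_set) simp
  then have "snd (last ?s) = 0" using z' unfolding Zs_def by blast
  then have "depart K ?s j = take j ?s @ drop (Suc j) ?s" by (intro depB) simp
  also have "\<dots> = s" using j by simp
  finally have "tgt ?s (Inr j) = s" by (simp add: tgt_def)
  moreover have "rho ?s (Inr j) = mu x" using j by (simp add: rho_def nth_append)
  ultimately show ?thesis using v' lab by blast
qed

lemma fwd_arr_small:
  assumes v: "valid_state K s" and len: "length s < K" and ne: "s \<noteq> []"
  shows "valid_state K (butlast s) \<and> Inl (fst (last s)) \<in> set (labels (butlast s))
     \<and> tgt (butlast s) (Inl (fst (last s))) = s \<and> rho (butlast s) (Inl (fst (last s))) = lam / real (K - (length s - 1))"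
proof -
  have z: "Zs s" using v len by (intro valid_Zs) auto
  have sb: "s = butlast s @ [last s]" using ne by simp
  have d: "distinct (map fst s)" "set (map fst s) \<subseteq> {..<K}" using v by (auto simp: valid_state_def)
  have mf: "map fst s = map fst (butlast s) @ [fst (last s)]" using ne by (rule map_snoc)
  have v': "valid_state K (butlast s)"
    using d z mf by (intro valid_of_Zs) (auto simp: Zs_butlast)
  have nin: "fst (last s) \<notin> set (map fst (butlast s))" using d(1) unfolding mf by auto
  have lK: "fst (last s) < K" using d(2) mf by auto
  have lab: "Inl (fst (last s)) \<in> set (labels (butlast s))" using len nin lK by (auto simp: labels_def)
  have "snd (last s) = 0" using z ne unfolding Zs_def by simp
  then have "butlast s @ [(fst (last s), 0)] = s" using ne by (intro snoc_last_pair)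
  moreover have lb: "length (butlast s) < K" using len by simp
  ultimately have "tgt (butlast s) (Inl (fst (last s))) = s" by (simp add: tgt_def)
  moreover have "rho (butlast s) (Inl (fst (last s))) = lam / real (K - (length s - 1))" using lb by (simp add: rho_def)
  ultimately show ?thesis using v' lab by blast
qed

lemma inv_depB:
  assumes v: "valid_state K s'" and j: "j < length s'" and nA: "\<not> (length s' = K \<and> 0 < snd (last s'))"
    and e: "depart K s' j = s"
  shows "length s < K \<and> j \<le> length s \<and> fst (s' ! j) < K \<and> fst (s' ! j) \<notin> set (map fst s)
     \<and> s' = take j s @ (fst (s' ! j), 0) # drop j s"
proof -
  have lK: "length s' \<le> K" by (rule valid_len[OF v])
  have z: "Zs s'" using v nA lK by (intro valid_Zs) auto
  have s: "s = take j s' @ drop (Suc j) s'" using depB[OF nA] e by simp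
  have len: "length s = length s' - 1" using s j by simp
  have "s' ! j \<in> set s'" using j by simp
  then have "snd (s' ! j) = 0" using z unfolding Zs_def by blast
  then have sj: "s' ! j = (fst (s' ! j), 0)" by (simp add: prod_eq_iff)
  have d: "distinct (map fst s')" "set (map fst s') \<subseteq> {..<K}" using v by (auto simp: valid_state_def)
  have xk: "fst (s' ! j) < K" using d(2) j by (auto simp: set_conv_nth)
  have u: "map fst s' = take j (map fst s') @ fst (s' ! j) # drop (Suc j) (map fst s')"
    using id_take_nth_drop[of j "map fst s'"] j by simp
  have "map fst s = take j (map fst s') @ drop (Suc j) (map fst s')" using s by (simp add: take_map drop_map)
  moreover have "distinct (take j (map fst s') @ fst (s' ! j) # drop (Suc j) (map fst s'))" using d(1) u by simp
  ultimately have xn: "fst (s' ! j) \<notin> set (map fst s)" by (auto simp: distinct_append)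
  have "s' = take j s' @ s' ! j # drop (Suc j) s'" using j by (simp add: id_take_nth_drop)
  moreover have "take j s = take j s'" "drop j s = drop (Suc j) s'" using s j by simp_all
  ultimately have "s' = take j s @ (fst (s' ! j), 0) # drop j s" using sj by simp
  then show ?thesis using len lK j xk xn by auto
qed

lemma inv_depA:
  assumes v: "valid_state K s'" and j: "j < length s'" and A: "length s' = K" and pos: "0 < snd (last s')"
    and e: "depart K s' j = s"
  shows "length s = K \<and> s' = setn (take j (butlast s) @ (fst (last s), 0) # drop j (butlast s)) (Suc (snd (last s)))"
proof -
  have ne: "s' \<noteq> []" using A K1 by auto
  define s0 where "s0 = butlast s' @ [(fst (last s'), 0)]"
  have ls0: "length s0 = K" using A ne K1 by (simp add: s0_def)
  have s: "s = (take j s0 @ drop (Suc j) s0) @ [(fst (s' ! j), snd (last s') - 1)]"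
    using depA[OF A pos] e by (simp add: s0_def)
  have bs: "butlast s = take j s0 @ drop (Suc j) s0" and ls: "last s = (fst (s' ! j), snd (last s') - 1)"
    unfolding s by (rule butlast_snoc, rule last_snoc)
  have lens: "length s = K" unfolding s using ls0 j A by simp
  have tb: "take j (butlast s) = take j s0" "drop j (butlast s) = drop (Suc j) s0" unfolding bs using j ls0 A by simp_all
  have zb: "Zs (butlast s')" using v by (simp add: valid_iff)
  have z0: "Zs s0" using zb unfolding Zs_def s0_def by auto
  have sb: "s' = butlast s' @ [last s']" using ne by simp
  have mf: "map fst s0 = map fst s'" unfolding s0_def by (subst (2) sb) simp
  have "fst (s0 ! j) = map fst s0 ! j" using j ls0 A by simp
  also have "\<dots> = fst (s' ! j)" using j by (simp add: mf)
  finally have f0: "fst (s0 ! j) = fst (s' ! j)" .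
  have "s0 ! j \<in> set s0" using j ls0 A by simp
  then have "snd (s0 ! j) = 0" using z0 unfolding Zs_def by blast
  with f0 have s0j: "s0 ! j = (fst (s' ! j), 0)" by (simp add: prod_eq_iff)
  have "take j s0 @ s0 ! j # drop (Suc j) s0 = s0" using j ls0 A by (simp add: id_take_nth_drop[symmetric])
  then have "take j (butlast s) @ (fst (last s), 0) # drop j (butlast s) = s0"
    unfolding tb ls fst_conv s0j .
  moreover have "setn s0 (Suc (snd (last s))) = s'"
  proof -
    have "Suc (snd (last s)) = snd (last s')" using ls pos by simp
    then have "setn s0 (Suc (snd (last s))) = butlast s' @ [(fst (last s'), snd (last s'))]"
      by (simp add: setn_def s0_def)
    also have "\<dots> = s'" using ne by simp
    finally show ?thesis .
  qed
  ultimately show ?thesis using lens by simp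
qed

lemma inv_arr:
  assumes v: "valid_state K s'" and l: "Inl t \<in> set (labels s')" and e: "tgt s' (Inl t) = s"
  shows "(length s' < K \<and> s \<noteq> [] \<and> s' = butlast s \<and> t = fst (last s) \<and> snd (last s) = 0 \<and> length s = Suc (length s'))
    \<or> (length s' = K \<and> t = 0 \<and> length s = K \<and> 0 < snd (last s) \<and> s' = setn s (snd (last s) - 1))"
proof (cases "length s' < K")
  case True
  then have "s = s' @ [(t, 0)]" using e by (simp add: tgt_def)
  then show ?thesis using True by simp
next
  case False
  then have A: "length s' = K" using valid_len[OF v] by simp
  have ne: "s' \<noteq> []" using A K1 by auto
  have t: "t = 0" using l False by (auto simp: labels_def)
  have s: "s = butlast s' @ [(fst (last s'), Suc (snd (last s')))]" using e False by (simp add: tgt_def)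
  have "setn s (snd (last s) - 1) = s'" using s ne by (simp add: setn_def)
  moreover have "length s = K" using s A ne K1 by simp
  ultimately show ?thesis using A t s by simp
qed

lemma fwd_arr_full0:
  assumes v: "valid_state K s" and len: "length s = K" and n0: "snd (last s) = 0"
  shows "valid_state K (butlast s) \<and> Inl (fst (last s)) \<in> set (labels (butlast s))
     \<and> tgt (butlast s) (Inl (fst (last s))) = s \<and> rho (butlast s) (Inl (fst (last s))) = lam"
proof -
  have ne: "s \<noteq> []" using len K1 by auto
  have z: "Zs s" using v n0 by (intro valid_Zs) auto
  have sb: "s = butlast s @ [last s]" using ne by simp
  have d: "distinct (map fst s)" "set (map fst s) \<subseteq> {..<K}" using v by (auto simp: valid_state_def)
  have mf: "map fst s = map fst (butlast s) @ [fst (last s)]" using ne by (rule map_snoc)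
  have v': "valid_state K (butlast s)"
    using d z mf by (intro valid_of_Zs) (auto simp: Zs_butlast)
  have nin: "fst (last s) \<notin> set (map fst (butlast s))" using d(1) unfolding mf by auto
  have lK: "fst (last s) < K" using d(2) mf by auto
  have lb: "length (butlast s) < K" using len ne K1 by simp
  have lab: "Inl (fst (last s)) \<in> set (labels (butlast s))" using lb nin lK by (auto simp: labels_def)
  have "butlast s @ [(fst (last s), 0)] = s" using ne n0 by (intro snoc_last_pair)
  then have "tgt (butlast s) (Inl (fst (last s))) = s" using lb by (simp add: tgt_def)
  moreover have "rho (butlast s) (Inl (fst (last s))) = lam" using lb len ne by (simp add: rho_def)
  ultimately show ?thesis using v' lab by blast
qed

lemma fwd_arr_fullp:
  assumes v: "valid_state K s" and len: "length s = K" and np: "0 < snd (last s)"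
  shows "valid_state K (setn s (snd (last s) - 1)) \<and> Inl 0 \<in> set (labels (setn s (snd (last s) - 1)))
     \<and> tgt (setn s (snd (last s) - 1)) (Inl 0) = s \<and> rho (setn s (snd (last s) - 1)) (Inl 0) = lam"
proof -
  have ne: "s \<noteq> []" using len K1 by auto
  let ?s = "setn s (snd (last s) - 1)"
  have v': "valid_state K ?s" using v ne len by (simp add: valid_iff setn_simps)
  have l': "length ?s = K" using ne len by (simp add: setn_simps)
  have lab: "Inl 0 \<in> set (labels ?s)" using l' by (simp add: labels_def)
  have "tgt ?s (Inl 0) = butlast s @ [(fst (last s), Suc (snd (last s) - 1))]"
    using l' ne by (simp add: tgt_def setn_simps)
  also have "\<dots> = s" using np ne by (intro snoc_last_pair) simp_all
  finally show ?thesis using v' lab l' by (simp add: rho_def)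
qed

lemma fwd_dep_full:
  assumes v: "valid_state K s" and len: "length s = K" and j: "j < K"
  defines "c \<equiv> take j (butlast s) @ (fst (last s), 0) # drop j (butlast s)"
  shows "valid_state K (setn c (Suc (snd (last s)))) \<and> Inr j \<in> set (labels (setn c (Suc (snd (last s)))))
     \<and> tgt (setn c (Suc (snd (last s)))) (Inr j) = s \<and> rho (setn c (Suc (snd (last s)))) (Inr j) = mu (fst (last s))
     \<and> map fst (setn c (Suc (snd (last s)))) = take j (map fst (butlast s)) @ fst (last s) # drop j (map fst (butlast s))"
proof -
  let ?b = "butlast s" and ?x = "fst (last s)" and ?n = "snd (last s)"
  let ?s = "setn c (Suc ?n)"
  have ne: "s \<noteq> []" using len K1 by auto
  have sb: "s = ?b @ [(?x, ?n)]" using ne by simp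
  have zb: "Zs ?b" using v by (simp add: valid_iff)
  have lb: "length ?b = K - 1" using len by simp
  have jb: "j \<le> length ?b" using j lb by simp
  have cne: "c \<noteq> []" by (simp add: c_def)
  have zc: "Zs c" unfolding c_def using zb by (rule Zs_ins)
  have lc: "length c = K" using jb lb j unfolding c_def by simp
  have d: "distinct (map fst s)" "set (map fst s) \<subseteq> {..<K}" using v by (auto simp: valid_state_def)
  have mf: "map fst s = map fst ?b @ [?x]" using ne by (rule map_snoc)
  have mfc: "map fst c = take j (map fst ?b) @ ?x # drop j (map fst ?b)" unfolding c_def by (rule map_fst_ins)
  have dc: "distinct (map fst c)" unfolding mfc using d(1) mf by (intro distinct_ins) auto
  have sc: "set (map fst c) \<subseteq> {..<K}" unfolding mfc set_ins using d(2) mf by auto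
  have m: "map fst ?s = map fst c" by (rule setn_simps(1)[OF cne])
  have bt: "butlast ?s = butlast c" by (rule setn_simps(4)[OF cne])
  have ls: "length ?s = K" using setn_simps(2)[OF cne] lc by simp
  have v': "valid_state K ?s"
    unfolding valid_iff m bt using dc sc Zs_butlast[OF zc] ls by simp
  have lab: "Inr j \<in> set (labels ?s)" using ls j by (simp add: labels_def)
  have s0: "butlast ?s @ [(fst (last ?s), 0)] = c"
  proof -
    have "snd (last c) = 0" using zc cne unfolding Zs_def by simp
    then have "butlast c @ [(fst (last c), 0)] = c" using cne by (intro snoc_last_pair)
    then show ?thesis using cne by (simp add: setn_simps)
  qed
  have fj: "fst (?s ! j) = ?x"
  proof -
    have "fst (?s ! j) = map fst ?s ! j" using ls j by simp
    also have "\<dots> = map fst c ! j" using cne by (simp add: setn_simps)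
    also have "\<dots> = ?x" unfolding mfc using jb by (simp add: nth_append)
    finally show ?thesis .
  qed
  have dA: "depart K ?s j = take j (butlast ?s @ [(fst (last ?s), 0)]) @ drop (Suc j) (butlast ?s @ [(fst (last ?s), 0)])
      @ [(fst (?s ! j), snd (last ?s) - 1)]"
    by (rule depA) (use ls cne in \<open>simp_all add: setn_simps\<close>)
  have sl: "snd (last ?s) = Suc ?n" using cne by (simp add: setn_simps)
  have tc: "take j c = take j ?b" "drop (Suc j) c = drop j ?b" using jb by (simp_all add: c_def)
  have "depart K ?s j = take j c @ drop (Suc j) c @ [(?x, ?n)]" unfolding dA s0 sl fj by simp
  also have "\<dots> = ?b @ [(?x, ?n)]" unfolding tc by simp
  also have "\<dots> = s" by (rule sb[symmetric])
  finally have dd: "depart K ?s j = s" .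
  have t: "tgt ?s (Inr j) = s" unfolding tgt_def sum.case by (rule dd)
  have r: "rho ?s (Inr j) = mu ?x" unfolding rho_def sum.case fj ..
  have mm: "map fst ?s = take j (map fst ?b) @ ?x # drop j (map fst ?b)" using m mfc by (rule trans)
  show ?thesis using v' lab t r mm by blast
qed

end


context Q begin

definition w :: "qstate \<Rightarrow> real" where "w s = (if valid_state K s then weight lam mu K s else 0)"

definition Ein :: "qstate \<Rightarrow> (qstate \<times> (nat + nat)) set" where
  "Ein s = {(s', l). valid_state K s' \<and> l \<in> set (labels s') \<and> tgt s' l = s}"

lemma weight_Pl: "weight lam mu K s = (if length s < K then lam ^ length s * fact (K - length s) / (fact K * Pl (map fst s))
    else lam ^ K / (fact K * Pl (map fst s)) * (lam / (\<Sum>l<K. mu l)) ^ snd (last s))"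
proof -
  have "(\<Prod>j<length s. \<Sum>l\<le>j. mu (fst (s ! l))) = Pl (map fst s)"
    unfolding Pl_def length_map by (intro prod.cong sum.cong refl) auto
  then show ?thesis unfolding weight_def Let_def by simp
qed

lemma busy_Pl: "s \<noteq> [] \<Longrightarrow> Pl (map fst s) = Pl (map fst (butlast s)) * busy s"
proof -
  assume ne: "s \<noteq> []"
  have "Pl (map fst s) = Pl (map fst (butlast s) @ [fst (last s)])" using map_snoc[OF ne, of fst] by simp
  also have "\<dots> = Pl (map fst (butlast s)) * (sum_list (map mu (map fst (butlast s))) + mu (fst (last s)))"
    by (rule Pl_snoc)
  also have "sum_list (map mu (map fst (butlast s))) + mu (fst (last s)) = sum_list (map mu (map fst s))"
    using map_snoc[OF ne, of fst] by simp
  also have "\<dots> = busy s" unfolding busy_def by (simp add: sum_list_sum_nth atLeast0LessThan)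
  finally show ?thesis .
qed

lemma busy_full: "valid_state K s \<Longrightarrow> length s = K \<Longrightarrow> busy s = (\<Sum>l<K. mu l)"
proof -
  assume v: "valid_state K s" and l: "length s = K"
  have "busy s = sum_list (map mu (map fst s))"
    unfolding busy_def by (simp add: sum_list_sum_nth atLeast0LessThan)
  also have "\<dots> = sum mu (set (map fst s))"
    using v by (intro sum_list_distinct_conv_sum_set) (auto simp: valid_state_def)
  also have "set (map fst s) = {..<K}" by (rule valid_full_set[OF v l])
  finally show ?thesis .
qed

lemma M_pos: "(\<Sum>l<K. mu l) > 0" using stab lampos by linarith

lemma inflow_reduce:
  assumes v: "valid_state K s" and fin: "finite (Ein s)"
  shows "(\<Sum>\<^sub>\<infinity>s'\<in>UNIV - {s}. w s' * rate lam mu K s' s) = (\<Sum>(s', l)\<in>Ein s. w s' * rho s' l)"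
proof -
  let ?B = "fst ` Ein s"
  have zero: "w s' * rate lam mu K s' s = 0" if "s' \<in> UNIV - {s} - ?B" for s'
  proof (rule ccontr)
    assume nz: "w s' * rate lam mu K s' s \<noteq> 0"
    then have vs: "valid_state K s'" by (auto simp: w_def split: if_splits)
    from nz have "rate lam mu K s' s \<noteq> 0" by auto
    then obtain l where "l \<in> {l \<in> set (labels s'). tgt s' l = s}" "rho s' l \<noteq> 0"
      unfolding rate_eq by (rule sum.not_neutral_contains_not_neutral)
    then have "l \<in> set (labels s')" "tgt s' l = s" by simp_all
    then have "(s', l) \<in> Ein s" using vs by (simp add: Ein_def)
    then have "s' \<in> ?B" by force
    then show False using that by blast
  qed
  have sB: "?B \<subseteq> UNIV - {s}"
  proof
    fix x assume "x \<in> ?B"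
    then obtain l where "(x, l) \<in> Ein s" by force
    then have "valid_state K x" "l \<in> set (labels x)" "tgt x l = s" by (auto simp: Ein_def)
    then have "x \<noteq> s" using tgt_ne by blast
    then show "x \<in> UNIV - {s}" by simp
  qed
  have finB: "finite ?B" using fin by simp
  have "((\<lambda>s'. w s' * rate lam mu K s' s) has_sum (\<Sum>s'\<in>?B. w s' * rate lam mu K s' s)) (UNIV - {s})"
    by (rule has_sum_finite_neutralI[OF finB sB zero refl])
  then have "(\<Sum>\<^sub>\<infinity>s'\<in>UNIV - {s}. w s' * rate lam mu K s' s) = (\<Sum>s'\<in>?B. w s' * rate lam mu K s' s)"
    by (rule infsumI)
  also have "\<dots> = (\<Sum>s'\<in>?B. \<Sum>l\<in>{l \<in> set (labels s'). tgt s' l = s}. w s' * rho s' l)"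
    by (simp add: rate_eq sum_distrib_left)
  also have "\<dots> = (\<Sum>(s', l)\<in>Sigma ?B (\<lambda>s'. {l \<in> set (labels s'). tgt s' l = s}). w s' * rho s' l)"
    by (subst sum.Sigma) (use finB in auto)
  also have "Sigma ?B (\<lambda>s'. {l \<in> set (labels s'). tgt s' l = s}) = Ein s"
    by (force simp: Ein_def image_iff)
  finally show ?thesis .
qed

lemma alg1: "(n::real) \<noteq> 0 \<Longrightarrow> d \<noteq> 0 \<Longrightarrow> a * (n * f) / d * (l / n) = a * l * f / d"
  by (simp add: field_simps)

lemma fact_step: "n < K \<Longrightarrow> (fact (K - n) :: real) = real (K - n) * fact (K - Suc n)"
proof -
  assume "n < K"
  then have "K - n = Suc (K - Suc n)" by simp
  then show ?thesis by (simp only: fact_Suc)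
qed

lemma inflow_small:
  assumes v: "valid_state K s" and len: "length s < K"
  shows "finite (Ein s) \<and> (\<Sum>(s', l)\<in>Ein s. w s' * rho s' l) = w s * outr s"
proof -
  let ?u = "map fst s" and ?i = "length s"
  define X where "X = {..<K} - set ?u"
  define I where "I = X \<times> {..?i}"
  define g where "g = (\<lambda>(x, j). (take j s @ (x, 0) # drop j s, Inr j :: nat + nat))"
  define Ea where "Ea = (if s = [] then {} else {(butlast s, Inl (fst (last s)) :: nat + nat)})"
  have Eeq: "Ein s = Ea \<union> g ` I"
  proof (intro equalityI subsetI)
    fix p assume p: "p \<in> Ein s"
    obtain s' l where pe: "p = (s', l)" by (cases p)
    have vs: "valid_state K s'" and l: "l \<in> set (labels s')" and tg: "tgt s' l = s"
      using p pe by (auto simp: Ein_def)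
    from labels_cases[OF l] show "p \<in> Ea \<union> g ` I"
    proof
      assume "\<exists>t. l = Inl t \<and> (length s' < K \<longrightarrow> t < K \<and> t \<notin> set (map fst s')) \<and> (\<not> length s' < K \<longrightarrow> t = 0)"
      then obtain t where t: "l = Inl t" by blast
      have "s \<noteq> [] \<and> s' = butlast s \<and> t = fst (last s)"
        using inv_arr[OF vs l[unfolded t] tg[unfolded t]]
        apply (elim disjE)
         apply blast
        using len by simp
      then show ?thesis using pe t by (simp add: Ea_def)
    next
      assume "\<exists>j. l = Inr j \<and> j < length s'"
      then obtain j where j: "l = Inr j" "j < length s'" by blast
      have dj: "depart K s' j = s" using tg j by (simp add: tgt_def)
      show ?thesis
      proof (cases "length s' = K \<and> 0 < snd (last s')")
        case True
        then have "length s = K" using inv_depA[OF vs j(2) _ _ dj] by auto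
        with len show ?thesis by simp
      next
        case False
        from inv_depB[OF vs j(2) False dj] have h: "j \<le> length s \<and> fst (s' ! j) < K
          \<and> fst (s' ! j) \<notin> set ?u \<and> s' = take j s @ (fst (s' ! j), 0) # drop j s" by blast
        then have "(fst (s' ! j), j) \<in> I" by (auto simp: I_def X_def)
        moreover have "p = g (fst (s' ! j), j)" using h pe j by (simp add: g_def)
        ultimately show ?thesis by blast
      qed
    qed
  next
    fix p assume "p \<in> Ea \<union> g ` I"
    then show "p \<in> Ein s"
    proof
      assume "p \<in> Ea"
      then have "s \<noteq> []" "p = (butlast s, Inl (fst (last s)))" by (auto simp: Ea_def split: if_splits)
      then show ?thesis using fwd_arr_small[OF v len] by (simp add: Ein_def)
    next
      assume "p \<in> g ` I"
      then obtain x j where "x \<in> X" "j \<le> ?i" "p = g (x, j)" by (auto simp: I_def)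
      then show ?thesis using fwd_dep_small[OF v len, of x j] by (auto simp: Ein_def g_def X_def)
    qed
  qed
  have finI: "finite I" by (simp add: I_def X_def)
  have injg: "inj_on g I"
  proof (rule inj_onI)
    fix a b assume a: "a \<in> I" "b \<in> I" "g a = g b"
    obtain x j where ab: "a = (x, j)" by (cases a)
    obtain y k where bb: "b = (y, k)" by (cases b)
    have jk: "j = k" using a(3) ab bb by (simp add: g_def)
    have ji: "j \<le> ?i" using a(1) ab by (simp add: I_def)
    have e: "take j s @ (x, 0) # drop j s = take j s @ (y, 0) # drop j s" using a(3) ab bb jk by (simp add: g_def)
    have "(take j s @ (x, 0) # drop j s) ! j = (x, 0)" "(take j s @ (y, 0) # drop j s) ! j = (y, 0)"
      using ji by (simp_all add: nth_append)
    with e have "x = y" by simp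
    then show "a = b" using ab bb jk by simp
  qed
  have disj: "Ea \<inter> g ` I = {}" by (auto simp: Ea_def g_def split: if_splits)
  have finEa: "finite Ea" by (simp add: Ea_def)
  have finE: "finite (Ein s)" unfolding Eeq using finI finEa by simp
  let ?f = "\<lambda>(s', l). w s' * rho s' l"
  have split: "(\<Sum>p\<in>Ein s. ?f p) = (\<Sum>p\<in>Ea. ?f p) + (\<Sum>p\<in>g ` I. ?f p)"
    unfolding Eeq by (rule sum.union_disjoint[OF finEa _ disj]) (use finI in simp)
  have su: "set ?u \<subseteq> {..<K}" using v by (simp add: valid_state_def)
  define P0 where "P0 = Pl ?u"
  have P0pos: "P0 > 0" unfolding P0_def by (rule Pl_pos[OF su])
  have ws: "w s = lam ^ ?i * fact (K - ?i) / (fact K * P0)"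
    using v len by (simp add: w_def weight_Pl P0_def)
  define c where "c = lam ^ Suc ?i * fact (K - Suc ?i) / (fact K :: real)"
  have wins: "w (take j s @ (x, 0) # drop j s) = c / Pl (take j ?u @ x # drop j ?u)"
    if x: "x \<in> X" and j: "j \<le> ?i" for x j
  proof -
    let ?s = "take j s @ (x, 0) # drop j s"
    have xK: "x < K" "x \<notin> set ?u" using x by (auto simp: X_def)
    have vs: "valid_state K ?s" using fwd_dep_small[OF v len xK j] by blast
    have ls: "length ?s = Suc ?i" using j by simp
    have mf: "map fst ?s = take j ?u @ x # drop j ?u" by (rule map_fst_ins)
    show ?thesis
    proof (cases "Suc ?i < K")
      case True
      then show ?thesis using vs ls by (simp add: w_def weight_Pl mf c_def take_map drop_map)
    next
      case False
      then have iK: "Suc ?i = K" using len by simp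
      have z: "Zs s" using v len by (intro valid_Zs) auto
      have "Zs ?s" using z by (rule Zs_ins)
      then have "snd (last ?s) = 0" unfolding Zs_def by (metis last_in_set Nil_is_append_conv list.distinct(1))
      then show ?thesis using vs ls iK by (simp add: w_def weight_Pl mf c_def take_map drop_map)
    qed
  qed
  have dep: "(\<Sum>p\<in>g ` I. ?f p) = lam * w s"
  proof -
    have "(\<Sum>p\<in>g ` I. ?f p) = (\<Sum>q\<in>I. ?f (g q))" by (rule sum.reindex_cong[OF injg refl refl])
    also have "\<dots> = (\<Sum>(x, j)\<in>I. c * (mu x / Pl (take j ?u @ x # drop j ?u)))"
    proof (intro sum.cong refl)
      fix q assume q: "q \<in> I"
      obtain x j where qe: "q = (x, j)" by (cases q)
      have x: "x \<in> X" and j: "j \<le> ?i" using q qe by (auto simp: I_def)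
      have xK: "x < K" "x \<notin> set ?u" using x by (auto simp: X_def)
      have r: "rho (take j s @ (x, 0) # drop j s) (Inr j) = mu x" using fwd_dep_small[OF v len xK j] by blast
      show "?f (g q) = (case q of (x, j) \<Rightarrow> c * (mu x / Pl (take j ?u @ x # drop j ?u)))"
        using wins[OF x j] r qe by (simp add: g_def)
    qed
    also have "\<dots> = (\<Sum>x\<in>X. \<Sum>j\<le>?i. c * (mu x / Pl (take j ?u @ x # drop j ?u)))"
      unfolding I_def by (rule sum.cartesian_product[symmetric])
    also have "\<dots> = (\<Sum>x\<in>X. c * (1 / P0))"
    proof (intro sum.cong refl)
      fix x assume x: "x \<in> X"
      have "(\<Sum>j\<le>?i. c * (mu x / Pl (take j ?u @ x # drop j ?u))) = c * (\<Sum>j\<le>length ?u. mu x / Pl (take j ?u @ x # drop j ?u))"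
        by (simp add: sum_distrib_left)
      also have "\<dots> = c * (1 / P0)" using tele[OF su, of x] x by (simp add: X_def P0_def)
      finally show "(\<Sum>j\<le>?i. c * (mu x / Pl (take j ?u @ x # drop j ?u))) = c * (1 / P0)" .
    qed
    also have "\<dots> = real (card X) * c / P0" by simp
    also have "card X = K - ?i"
    proof -
      have "card X = card {..<K} - card (set ?u)" unfolding X_def using su by (simp add: card_Diff_subset)
      also have "card (set ?u) = ?i" using v distinct_card[of ?u] by (simp add: valid_state_def)
      finally show ?thesis by simp
    qed
    also have "real (K - ?i) * c / P0 = lam * w s"
      unfolding ws c_def using fact_step[OF len] by (simp add: field_simps)
    finally show ?thesis .
  qed
  have arr: "(\<Sum>p\<in>Ea. ?f p) = w s * busy s"
  proof (cases "s = []")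
    case True then show ?thesis by (simp add: Ea_def busy_def)
  next
    case False
    let ?b = "butlast s"
    have fa: "valid_state K ?b \<and> rho ?b (Inl (fst (last s))) = lam / real (K - (?i - 1))"
      using fwd_arr_small[OF v len False] by blast
    have i1: "?i \<ge> 1" using False by (cases s) auto
    define Pb where "Pb = Pl (map fst ?b)"
    have Pbpos: "Pb > 0" unfolding Pb_def by (rule Pl_pos) (use su in \<open>auto dest: in_set_butlastD\<close>)
    have P0b: "P0 = Pb * busy s" unfolding P0_def Pb_def by (rule busy_Pl[OF False])
    have wb: "w ?b = lam ^ (?i - 1) * fact (K - (?i - 1)) / (fact K * Pb)"
    proof -
      have lbk: "length ?b < K" using len by simp
      have "valid_state K ?b" using fa by blast
      then show ?thesis using lbk by (simp add: w_def weight_Pl Pb_def)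
    qed
    have "(\<Sum>p\<in>Ea. ?f p) = w ?b * (lam / real (K - (?i - 1)))" using False fa by (simp add: Ea_def)
    also have "\<dots> = lam ^ ?i * fact (K - ?i) / (fact K * Pb)"
    proof -
      have k: "K - (?i - 1) = Suc (K - ?i)" using i1 len by simp
      have f: "(fact (K - (?i - 1)) :: real) = real (Suc (K - ?i)) * fact (K - ?i)" unfolding k by simp
      have l: "lam ^ ?i = lam ^ (?i - 1) * lam" using power_minus_mult[of ?i lam] False by simp
      have dpos: "fact K * Pb \<noteq> 0" using Pbpos by simp
      have "w ?b * (lam / real (K - (?i - 1))) =
          lam ^ (?i - 1) * (real (Suc (K - ?i)) * fact (K - ?i)) / (fact K * Pb) * (lam / real (Suc (K - ?i)))"
        by (simp only: wb k fact_Suc)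
      also have "\<dots> = lam ^ (?i - 1) * lam * fact (K - ?i) / (fact K * Pb)"
        by (rule alg1) (use dpos in simp_all)
      also have "\<dots> = lam ^ ?i * fact (K - ?i) / (fact K * Pb)" using l by simp
      finally show ?thesis .
    qed
    also have "\<dots> = w s * busy s"
    proof -
      have bpos: "busy s > 0" using P0pos Pbpos P0b zero_less_mult_pos[of Pb "busy s"] by simp
      show ?thesis unfolding ws P0b using bpos by (simp add: field_simps)
    qed
    finally show ?thesis .
  qed
  have "(\<Sum>p\<in>Ein s. ?f p) = w s * outr s"
    unfolding split dep arr outr_eq[OF v] by (simp add: algebra_simps)
  then show ?thesis using finE by simp
qed

end


context Q begin

lemma inflow_full:
  assumes v: "valid_state K s" and len: "length s = K"
  shows "finite (Ein s) \<and> (\<Sum>(s', l)\<in>Ein s. w s' * rho s' l) = w s * outr s"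
proof -
  have ne: "s \<noteq> []" using len K1 by auto
  let ?b = "butlast s" and ?x = "fst (last s)" and ?n = "snd (last s)"
  let ?M = "\<Sum>l<K. mu l"
  define c where "c j = take j ?b @ (?x, 0) # drop j ?b" for j
  define g where "g j = (setn (c j) (Suc ?n), Inr j :: nat + nat)" for j
  define a0 where "a0 = (if ?n = 0 then (?b, Inl ?x) else (setn s (?n - 1), Inl 0 :: nat + nat))"
  have Eeq: "Ein s = {a0} \<union> g ` {..<K}"
  proof (intro equalityI subsetI)
    fix p assume p: "p \<in> Ein s"
    obtain s' l where pe: "p = (s', l)" by (cases p)
    have vs: "valid_state K s'" and l: "l \<in> set (labels s')" and tg: "tgt s' l = s"
      using p pe by (auto simp: Ein_def)
    from labels_cases[OF l] show "p \<in> {a0} \<union> g ` {..<K}"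
    proof
      assume "\<exists>t. l = Inl t \<and> (length s' < K \<longrightarrow> t < K \<and> t \<notin> set (map fst s')) \<and> (\<not> length s' < K \<longrightarrow> t = 0)"
      then obtain t where t: "l = Inl t" by blast
      from inv_arr[OF vs l[unfolded t] tg[unfolded t]]
      have "p = a0"
      proof (elim disjE)
        assume h: "length s' < K \<and> s \<noteq> [] \<and> s' = butlast s \<and> t = fst (last s) \<and> snd (last s) = 0 \<and> length s = Suc (length s')"
        then show "p = a0" using pe t by (simp add: a0_def)
      next
        assume h: "length s' = K \<and> t = 0 \<and> length s = K \<and> 0 < snd (last s) \<and> s' = setn s (snd (last s) - 1)"
        then show "p = a0" using pe t by (simp add: a0_def)
      qed
      then show ?thesis by simp
    next
      assume "\<exists>j. l = Inr j \<and> j < length s'"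
      then obtain j where j: "l = Inr j" "j < length s'" by blast
      have dj: "depart K s' j = s" using tg j by (simp add: tgt_def)
      show ?thesis
      proof (cases "length s' = K \<and> 0 < snd (last s')")
        case True
        then have "s' = setn (c j) (Suc ?n)"
          using inv_depA[OF vs j(2) _ _ dj] by (simp add: c_def)
        moreover have "j < K" using True j by simp
        ultimately show ?thesis using pe j by (simp add: g_def)
      next
        case False
        from inv_depB[OF vs j(2) False dj] have "length s < K" by blast
        with len show ?thesis by simp
      qed
    qed
  next
    fix p assume "p \<in> {a0} \<union> g ` {..<K}"
    then show "p \<in> Ein s"
    proof
      assume "p \<in> {a0}"
      then have pa: "p = a0" by simp
      show ?thesis
      proof (cases "?n = 0")
        case True then show ?thesis using pa fwd_arr_full0[OF v len True] by (simp add: a0_def Ein_def)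
      next
        case False then show ?thesis using pa fwd_arr_fullp[OF v len] by (simp add: a0_def Ein_def)
      qed
    next
      assume "p \<in> g ` {..<K}"
      then obtain j where "j < K" "p = g j" by auto
      then show ?thesis using fwd_dep_full[OF v len, of j] by (simp add: Ein_def g_def c_def)
    qed
  qed
  have injg: "inj_on g {..<K}" by (rule inj_onI) (simp add: g_def)
  have disj: "a0 \<notin> g ` {..<K}" by (auto simp: a0_def g_def)
  have finE: "finite (Ein s)" unfolding Eeq by simp
  let ?f = "\<lambda>(s', l). w s' * rho s' l"
  have split: "(\<Sum>p\<in>Ein s. ?f p) = ?f a0 + (\<Sum>j<K. ?f (g j))"
  proof -
    have "(\<Sum>p\<in>Ein s. ?f p) = (\<Sum>p\<in>insert a0 (g ` {..<K}). ?f p)" unfolding Eeq by simp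
    also have "\<dots> = ?f a0 + (\<Sum>p\<in>g ` {..<K}. ?f p)" using disj by (simp add: sum.insert)
    also have "(\<Sum>p\<in>g ` {..<K}. ?f p) = (\<Sum>j<K. ?f (g j))" by (rule sum.reindex_cong[OF injg refl refl])
    finally show ?thesis .
  qed
  have d: "distinct (map fst s)" "set (map fst s) \<subseteq> {..<K}" using v by (auto simp: valid_state_def)
  have mf: "map fst s = map fst ?b @ [?x]" using ne by (rule map_snoc)
  have sb: "set (map fst ?b) \<subseteq> {..<K}" and xK: "?x < K" using d(2) mf by auto
  define Pb where "Pb = Pl (map fst ?b)"
  have Pbpos: "Pb > 0" unfolding Pb_def by (rule Pl_pos[OF sb])
  have Mpos: "?M > 0" by (rule M_pos)
  have Pu: "Pl (map fst s) = Pb * ?M" unfolding Pb_def using busy_Pl[OF ne] busy_full[OF v len] by simp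
  define q where "q = lam / ?M"
  have qM: "q * ?M = lam" using Mpos by (simp add: q_def)
  have ws: "w s = lam ^ K / (fact K * (Pb * ?M)) * q ^ ?n"
    using v len by (simp add: w_def weight_Pl Pu q_def)
  have wg: "?f (g j) = lam ^ K * q ^ Suc ?n / fact K * (mu ?x / Pl (take j (map fst ?b) @ ?x # drop j (map fst ?b)))"
    if j: "j < K" for j
  proof -
    have h: "valid_state K (setn (c j) (Suc ?n)) \<and> rho (setn (c j) (Suc ?n)) (Inr j) = mu ?x
      \<and> map fst (setn (c j) (Suc ?n)) = take j (map fst ?b) @ ?x # drop j (map fst ?b)"
      using fwd_dep_full[OF v len j] by (simp add: c_def)
    have cne: "c j \<noteq> []" by (simp add: c_def)
    have lc: "length (setn (c j) (Suc ?n)) = K" using j len ne setn_simps(2)[OF cne] by (simp add: c_def)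
    have sl: "snd (last (setn (c j) (Suc ?n))) = Suc ?n" using setn_simps(3)[OF cne] by simp
    have "w (setn (c j) (Suc ?n)) = lam ^ K / (fact K * Pl (take j (map fst ?b) @ ?x # drop j (map fst ?b))) * q ^ Suc ?n"
      using h lc sl by (simp add: w_def weight_Pl q_def)
    then show ?thesis using h by (simp add: g_def)
  qed
  have dep: "(\<Sum>j<K. ?f (g j)) = w s * lam"
  proof -
    have "(\<Sum>j<K. ?f (g j)) = (\<Sum>j<K. lam ^ K * q ^ Suc ?n / fact K * (mu ?x / Pl (take j (map fst ?b) @ ?x # drop j (map fst ?b))))"
      by (rule sum.cong[OF refl]) (simp add: wg)
    also have "\<dots> = lam ^ K * q ^ Suc ?n / fact K * (\<Sum>j<K. mu ?x / Pl (take j (map fst ?b) @ ?x # drop j (map fst ?b)))"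
      by (simp add: sum_distrib_left)
    also have "(\<Sum>j<K. mu ?x / Pl (take j (map fst ?b) @ ?x # drop j (map fst ?b))) = 1 / Pb"
    proof -
      have KK: "{..<K} = {..length (map fst ?b)}" using len K1 by auto
      show ?thesis unfolding KK Pb_def by (rule tele[OF sb xK])
    qed
    also have "lam ^ K * q ^ Suc ?n / fact K * (1 / Pb) = lam ^ K / (fact K * (Pb * ?M)) * q ^ ?n * (q * ?M)"
      using Pbpos Mpos by (simp add: field_simps)
    also have "\<dots> = w s * lam" unfolding ws qM ..
    finally show ?thesis .
  qed
  have arr: "?f a0 = w s * ?M"
  proof (cases "?n = 0")
    case True
    have h: "valid_state K ?b \<and> rho ?b (Inl ?x) = lam" using fwd_arr_full0[OF v len True] by blast
    have lb: "length ?b = K - 1" "length ?b < K" using len K1 by auto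
    have "w ?b = lam ^ (K - 1) * fact (K - (K - 1)) / (fact K * Pb)"
      using h lb by (simp add: w_def weight_Pl Pb_def)
    also have "fact (K - (K - 1)) = (1 :: real)" using K1 by simp
    finally have wb: "w ?b = lam ^ (K - 1) / (fact K * Pb)" by simp
    have l: "lam ^ K = lam ^ (K - 1) * lam" using power_minus_mult[of K lam] K1 by simp
    have "?f a0 = lam ^ (K - 1) / (fact K * Pb) * lam" using True h wb by (simp add: a0_def)
    also have "\<dots> = w s * ?M" unfolding ws True l using Pbpos Mpos by (simp add: field_simps)
    finally show ?thesis .
  next
    case False
    have h: "valid_state K (setn s (?n - 1)) \<and> rho (setn s (?n - 1)) (Inl 0) = lam"
      using fwd_arr_fullp[OF v len] False by blast
    have ls: "length (setn s (?n - 1)) = K" using setn_simps(2)[OF ne] len by simp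
    have mfs: "map fst (setn s (?n - 1)) = map fst s" by (rule setn_simps(1)[OF ne])
    have sl: "snd (last (setn s (?n - 1))) = ?n - 1" using setn_simps(3)[OF ne] by simp
    have ww: "w (setn s (?n - 1)) = lam ^ K / (fact K * (Pb * ?M)) * q ^ (?n - 1)"
      using h ls sl by (simp add: w_def weight_Pl setn_simps(1)[OF ne] Pu q_def)
    have qn: "q ^ ?n = q ^ (?n - 1) * q" using power_minus_mult[of ?n q] False by simp
    have "?f a0 = lam ^ K / (fact K * (Pb * ?M)) * q ^ (?n - 1) * lam" using False h ww by (simp add: a0_def)
    also have "\<dots> = lam ^ K / (fact K * (Pb * ?M)) * q ^ (?n - 1) * (q * ?M)" unfolding qM ..
    also have "\<dots> = lam ^ K / (fact K * (Pb * ?M)) * (q ^ (?n - 1) * q) * ?M" by (simp only: mult_ac)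
    also have "\<dots> = w s * ?M" unfolding ws qn ..
    finally show ?thesis .
  qed
  have "(\<Sum>p\<in>Ein s. ?f p) = w s * outr s"
    unfolding split dep arr outr_eq[OF v] busy_full[OF v len] by (simp add: algebra_simps)
  then show ?thesis using finE by simp
qed

end


context Q begin

definition hh :: "nat list \<times> nat \<Rightarrow> qstate" where "hh = (\<lambda>(u, n). setn (map (\<lambda>t. (t, 0)) u) n)"

lemma w_nonneg: "w s \<ge> 0"
proof (cases "valid_state K s")
  case True
  have su: "set (map fst s) \<subseteq> {..<K}" using True by (simp add: valid_state_def)
  have "Pl (map fst s) > 0" by (rule Pl_pos[OF su])
  moreover have "(\<Sum>l<K. mu l) > 0" by (rule M_pos)
  ultimately show ?thesis using True lampos by (simp add: w_def weight_Pl)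
next
  case False then show ?thesis by (simp add: w_def)
qed

lemma w_Nil: "w [] = 1"
proof -
  have "valid_state K []" by (simp add: valid_state_def)
  then show ?thesis using K1 by (simp add: w_def weight_Pl)
qed

lemma q_facts: "0 \<le> lam / (\<Sum>l<K. mu l)" "lam / (\<Sum>l<K. mu l) < 1"
  using lampos M_pos stab by (auto simp: divide_simps)

lemma hh_props:
  assumes u: "distinct u" "set u \<subseteq> {..<K}" "length u = K"
  shows "valid_state K (hh (u, n)) \<and> map fst (hh (u, n)) = u \<and> snd (last (hh (u, n))) = n \<and> length (hh (u, n)) = K"
proof -
  have une: "map (\<lambda>t. (t, 0::nat)) u \<noteq> []" using u K1 by auto
  have m: "map fst (hh (u, n)) = u" unfolding hh_def using setn_simps(1)[OF une] by (simp add: comp_def)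
  have l: "length (hh (u, n)) = K" unfolding hh_def using setn_simps(2)[OF une] u by simp
  have sl: "snd (last (hh (u, n))) = n" unfolding hh_def using setn_simps(3)[OF une] by simp
  have hh_eq: "hh (u, n) = setn (map (\<lambda>t. (t, 0)) u) n" by (simp add: hh_def)
  have bz: "Zs (butlast (hh (u, n)))" unfolding hh_eq setn_simps(4)[OF une] Zs_def
    by (auto dest: in_set_butlastD)
  have "valid_state K (hh (u, n))" unfolding valid_iff m using u bz l by simp
  then show ?thesis using m l sl by simp
qed

lemma full_in_hh: "valid_state K s \<Longrightarrow> length s = K \<Longrightarrow> s = hh (map fst s, snd (last s))"
proof -
  assume v: "valid_state K s" and l: "length s = K"
  have ne: "s \<noteq> []" using l K1 by auto
  have z: "Zs (butlast s)" using v by (simp add: valid_iff)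
  have mb: "map (\<lambda>p. (fst p, 0::nat)) (butlast s) = butlast s"
    by (rule map_idI) (use z in \<open>auto simp: Zs_def prod_eq_iff\<close>)
  have "hh (map fst s, snd (last s)) = butlast (map (\<lambda>t. (t, 0::nat)) (map fst s)) @ [(fst (last (map (\<lambda>t. (t, 0::nat)) (map fst s))), snd (last s))]"
    by (simp add: hh_def setn_def)
  also have "\<dots> = butlast s @ [(fst (last s), snd (last s))]"
    using ne mb by (simp add: map_butlast[symmetric] last_map comp_def)
  also have "\<dots> = s" using ne by simp
  finally show ?thesis by simp
qed

lemma w_summable: "w summable_on UNIV"
proof -
  let ?M = "\<Sum>l<K. mu l"
  define q where "q = lam / ?M"
  have q0: "0 \<le> q" "q < 1" using q_facts by (simp_all add: q_def)
  define P where "P = {u. distinct u \<and> set u \<subseteq> {..<K} \<and> length u = K}"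
  have finP: "finite P"
  proof (rule finite_subset)
    show "P \<subseteq> {u. set u \<subseteq> {..<K} \<and> length u = K}" by (auto simp: P_def)
    show "finite {u. set u \<subseteq> {..<K} \<and> length u = K}" by (rule finite_lists_length_eq) simp
  qed
  define C where "C u = lam ^ K / (fact K * Pl u)" for u
  have wh: "w (hh (u, n)) = C u * q ^ n" if "u \<in> P" for u n
  proof -
    have h: "valid_state K (hh (u, n)) \<and> map fst (hh (u, n)) = u \<and> snd (last (hh (u, n))) = n \<and> length (hh (u, n)) = K"
      using that by (intro hh_props) (auto simp: P_def)
    then show ?thesis by (simp add: w_def weight_Pl C_def q_def)
  qed
  have C0: "C u \<ge> 0" if "u \<in> P" for u
  proof -
    have "Pl u > 0" using that by (intro Pl_pos) (auto simp: P_def)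
    then show ?thesis using lampos by (simp add: C_def)
  qed
  have inner: "((\<lambda>n. (w \<circ> hh) (u, n)) has_sum (C u * (1 / (1 - q)))) UNIV" if "u \<in> P" for u
  proof -
    have "(\<lambda>n. q ^ n) sums (1 / (1 - q))" using q0 by (intro geometric_sums) simp
    then have "(\<lambda>n. C u * q ^ n) sums (C u * (1 / (1 - q)))" by (rule sums_mult)
    then have "((\<lambda>n. C u * q ^ n) has_sum (C u * (1 / (1 - q)))) UNIV"
      by (rule sums_nonneg_imp_has_sum) (use C0[OF that] q0 in simp)
    then show ?thesis using wh[OF that] by (simp add: comp_def)
  qed
  have sig: "(w \<circ> hh) summable_on Sigma P (\<lambda>_. UNIV)"
    by (rule summable_on_SigmaI[OF inner]) (use finP in \<open>auto intro: w_nonneg\<close>)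
  have injh: "inj_on hh (P \<times> UNIV)"
  proof (rule inj_onI)
    fix a b assume a: "a \<in> P \<times> UNIV" "b \<in> P \<times> UNIV" "hh a = hh b"
    obtain u n where ae: "a = (u, n)" by (cases a)
    obtain u' n' where be: "b = (u', n')" by (cases b)
    have ha: "map fst (hh (u, n)) = u \<and> snd (last (hh (u, n))) = n"
      using a(1) ae hh_props[of u n] by (auto simp: P_def)
    have hb: "map fst (hh (u', n')) = u' \<and> snd (last (hh (u', n'))) = n'"
      using a(2) be hh_props[of u' n'] by (auto simp: P_def)
    show "a = b" using ha hb a(3) ae be by metis
  qed
  have s1: "w summable_on hh ` (P \<times> UNIV)"
    using sig summable_on_reindex[OF injh, of w] by simp
  define Vs where "Vs = {s. valid_state K s \<and> length s < K}"
  have finVs: "finite Vs"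
  proof (rule finite_subset)
    show "Vs \<subseteq> {xs. set xs \<subseteq> {..<K} \<times> {0} \<and> length xs \<le> K}"
    proof
      fix s assume "s \<in> Vs"
      then have v: "valid_state K s" and l: "length s < K" by (auto simp: Vs_def)
      have z: "Zs s" using v l by (intro valid_Zs) auto
      have "set (map fst s) \<subseteq> {..<K}" using v by (simp add: valid_state_def)
      then have "set s \<subseteq> {..<K} \<times> {0}" using z by (auto simp: Zs_def)
      then show "s \<in> {xs. set xs \<subseteq> {..<K} \<times> {0} \<and> length xs \<le> K}" using l by simp
    qed
    show "finite {xs. set xs \<subseteq> {..<K} \<times> {0} \<and> length xs \<le> K}" by (rule finite_lists_length_le) simp
  qed
  have s2: "w summable_on (Vs \<union> hh ` (P \<times> UNIV))"
    by (rule summable_on_union) (use finVs s1 in auto)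
  show ?thesis
  proof (rule summable_on_cong_neutral[THEN iffD1, OF _ _ _ s2])
    fix x assume "x \<in> UNIV - (Vs \<union> hh ` (P \<times> UNIV))"
    then have nx: "x \<notin> Vs" "x \<notin> hh ` (P \<times> UNIV)" by auto
    show "w x = 0"
    proof (cases "valid_state K x")
      case True
      have "length x \<le> K" by (rule valid_len[OF True])
      moreover have "length x \<noteq> K"
      proof
        assume l: "length x = K"
        have "x = hh (map fst x, snd (last x))" by (rule full_in_hh[OF True l])
        moreover have "map fst x \<in> P" using True l by (auto simp: P_def valid_state_def)
        ultimately show False using nx(2) by blast
      qed
      ultimately have "x \<in> Vs" using True by (simp add: Vs_def)
      then show ?thesis using nx(1) by simp
    next
      case False then show ?thesis by (simp add: w_def)
    qed
  qed auto
qed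

end


context Q begin

lemma out_infsum:
  assumes v: "valid_state K s"
  shows "(\<Sum>\<^sub>\<infinity>s'\<in>UNIV - {s}. rate lam mu K s s') = outr s"
proof -
  have "(rate lam mu K s has_sum outr s) (UNIV - {s})"
    using has_sum_cong_neutral[of "UNIV - {s}" UNIV "rate lam mu K s" "\<lambda>s'. if s' = s then 0 else rate lam mu K s s'"]
      out_has_sum[OF v] by auto
  then show ?thesis by (rule infsumI)
qed

lemma infsum_R: "(\<Sum>\<^sub>\<infinity>s'\<in>UNIV - {s}. f s' * rate lam mu K s' s) = (\<Sum>\<^sub>\<infinity>t. f t * (if s = t then 0 else rate lam mu K t s))"
  by (rule infsum_cong_neutral) auto

lemma balance_w:
  assumes v: "valid_state K s"
  shows "w s * outr s = (\<Sum>\<^sub>\<infinity>s'\<in>UNIV - {s}. w s' * rate lam mu K s' s)"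
proof (cases "length s < K")
  case True
  then show ?thesis using inflow_small[OF v True] inflow_reduce[OF v] by simp
next
  case False
  then have "length s = K" using valid_len[OF v] by simp
  then show ?thesis using inflow_full[OF v] inflow_reduce[OF v] by simp
qed

lemma R_bounds:
  assumes v: "valid_state K t"
  shows "0 \<le> (if s = t then 0 else rate lam mu K t s)" "(if s = t then 0 else rate lam mu K t s) \<le> lam + (\<Sum>l<K. mu l)"
proof -
  show "0 \<le> (if s = t then 0 else rate lam mu K t s)" using rate_nonneg[OF v] by simp
  have "rate lam mu K t s \<le> outr t"
    unfolding rate_eq outr_def by (rule sum_mono2) (auto intro: less_imp_le rho_pos[OF v])
  moreover have "outr t \<le> lam + (\<Sum>l<K. mu l)" using outr_eq[OF v] busy_le[OF v] by simp
  ultimately show "(if s = t then 0 else rate lam mu K t s) \<le> lam + (\<Sum>l<K. mu l)"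
    using M_pos lampos by auto
qed

lemma prod_summable:
  assumes f: "f summable_on UNIV" and f0: "\<And>t. \<not> valid_state K t \<Longrightarrow> f t = 0"
  shows "(\<lambda>t. f t * (if s = t then 0 else rate lam mu K t s)) summable_on UNIV"
proof -
  let ?C = "lam + (\<Sum>l<K. mu l)"
  have af: "(\<lambda>t. norm (f t)) summable_on UNIV"
    using summable_on_iff_abs_summable_on_real[THEN iffD1, OF f] .
  have g: "(\<lambda>t. ?C * norm (f t)) summable_on UNIV" using af by (rule summable_on_cmult_right)
  have "(\<lambda>t. norm (f t * (if s = t then 0 else rate lam mu K t s))) summable_on UNIV"
  proof (rule summable_on_comparison_test[OF g])
    fix t
    show "0 \<le> norm (f t * (if s = t then 0 else rate lam mu K t s))" by simp
    show "norm (f t * (if s = t then 0 else rate lam mu K t s)) \<le> ?C * norm (f t)"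
    proof (cases "valid_state K t")
      case True
      have "\<bar>f t\<bar> * \<bar>if s = t then 0 else rate lam mu K t s\<bar> \<le> \<bar>f t\<bar> * ?C"
        using R_bounds[OF True, of s] by (intro mult_left_mono) auto
      then show ?thesis using M_pos lampos by (simp add: abs_mult mult.commute)
    next
      case False then show ?thesis by (simp add: f0)
    qed
  qed
  then show ?thesis by (rule abs_summable_summable)
qed

lemma stationary_form:
  assumes st: "stationary lam mu K p" and v: "valid_state K s"
  shows "p s = p [] * w s"
proof -
  have pnn: "\<And>s. p s \<ge> 0" and p0: "\<And>s. \<not> valid_state K s \<Longrightarrow> p s = 0" and ph: "(p has_sum 1) UNIV"
    and pb: "\<And>s. valid_state K s \<Longrightarrow> p s * (\<Sum>\<^sub>\<infinity>s'\<in>UNIV - {s}. rate lam mu K s s') =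
        (\<Sum>\<^sub>\<infinity>s'\<in>UNIV - {s}. p s' * rate lam mu K s' s)"
    using st unfolding stationary_def by blast+
  define R where "R t s = (if s = t then 0 else rate lam mu K t s)" for t s
  define d where "d t = p t + (- p []) * w t" for t
  have psum: "p summable_on UNIV" using ph by (auto simp: summable_on_def)
  have w0: "\<And>t. \<not> valid_state K t \<Longrightarrow> w t = 0" by (simp add: w_def)
  have dsum: "d summable_on UNIV" unfolding d_def
    by (intro summable_on_add psum summable_on_cmult_right w_summable)
  have d0: "\<And>t. t \<notin> Collect (valid_state K) \<Longrightarrow> d t = 0" by (simp add: d_def p0 w0)
  have Rnn: "\<And>t s. t \<in> Collect (valid_state K) \<Longrightarrow> R t s \<ge> 0" using R_bounds by (simp add: R_def)
  have Rsum: "\<And>t. t \<in> Collect (valid_state K) \<Longrightarrow> (R t has_sum outr t) UNIV"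
  proof -
    fix t assume "t \<in> Collect (valid_state K)"
    moreover have "R t = (\<lambda>s. if s = t then 0 else rate lam mu K t s)" by (rule ext) (simp add: R_def)
    ultimately show "(R t has_sum outr t) UNIV" using out_has_sum by simp
  qed
  have Rb: "\<And>t. t \<in> Collect (valid_state K) \<Longrightarrow> outr t \<le> lam + (\<Sum>l<K. mu l)"
    using outr_eq busy_le by simp
  have bal: "d s * outr s = (\<Sum>\<^sub>\<infinity>t. d t * R t s)" if vs: "s \<in> Collect (valid_state K)" for s
  proof -
    have vs': "valid_state K s" using vs by simp
    have e1: "p s * outr s = (\<Sum>\<^sub>\<infinity>t. p t * R t s)"
      using pb[OF vs'] out_infsum[OF vs'] infsum_R[of p s] by (simp add: R_def)
    have e2: "w s * outr s = (\<Sum>\<^sub>\<infinity>t. w t * R t s)"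
      using balance_w[OF vs'] infsum_R[of w s] by (simp add: R_def)
    have s1: "(\<lambda>t. p t * R t s) summable_on UNIV" unfolding R_def by (rule prod_summable[OF psum p0])
    have s2: "(\<lambda>t. w t * R t s) summable_on UNIV" unfolding R_def by (rule prod_summable[OF w_summable w0])
    have s3: "(\<lambda>t. (- p []) * (w t * R t s)) summable_on UNIV" using s2 by (rule summable_on_cmult_right)
    have "(\<Sum>\<^sub>\<infinity>t. d t * R t s) = (\<Sum>\<^sub>\<infinity>t. p t * R t s + (- p []) * (w t * R t s))"
      by (simp add: d_def algebra_simps)
    also have "\<dots> = (\<Sum>\<^sub>\<infinity>t. p t * R t s) + (\<Sum>\<^sub>\<infinity>t. (- p []) * (w t * R t s))"
      by (rule infsum_add[OF s1 s3])
    also have "(\<Sum>\<^sub>\<infinity>t. (- p []) * (w t * R t s)) = (- p []) * (\<Sum>\<^sub>\<infinity>t. w t * R t s)"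
      by (rule infsum_cmult_right')
    finally show ?thesis using e1 e2 by (simp add: d_def algebra_simps)
  qed
  have main: "valid_state K s \<longrightarrow> d s = 0" for s
  proof (induction "msr s" arbitrary: s rule: less_induct)
    case less
    show ?case
    proof
      assume vs: "valid_state K s"
      show "d s = 0"
      proof (cases "s = []")
        case True then show ?thesis by (simp add: d_def w_Nil)
      next
        case False
        let ?l = "Inr 0 :: nat + nat"
        have l: "?l \<in> set (labels s)" using False by (simp add: labels_def)
        let ?s1 = "tgt s ?l"
        have m: "msr ?s1 < msr s" using depart_msr[OF vs, of 0] False by (simp add: tgt_def)
        have ds1: "d ?s1 = 0"
        proof (cases "valid_state K ?s1")
          case True then show ?thesis using less m by blast
        next
          case False then show ?thesis using d0 by simp
        qed
        have ne: "?s1 \<noteq> s" by (rule tgt_ne[OF vs l])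
        have vsC: "s \<in> Collect (valid_state K)" using vs by simp
        have Rpos: "R s ?s1 > 0" using rate_pos[OF vs l] ne by (simp add: R_def)
        show ?thesis
          by (rule abstract_zero[where d = d and R = R and out = outr and V = "Collect (valid_state K)"
                and C = "lam + (\<Sum>l<K. mu l)", OF dsum d0 Rnn Rsum Rb bal ds1 vsC Rpos])
      qed
    qed
  qed
  then show ?thesis using v by (simp add: d_def)
qed

end



theorem mainTheorem8:
  fixes lam :: real and mu :: "nat \<Rightarrow> real" and K :: nat
  assumes "K \<ge> 1" and "lam > 0" and "\<And>l. l < K \<Longrightarrow> mu l > 0"
    and "lam < (\<Sum>l<K. mu l)"
  shows "(\<exists>!p. stationary lam mu K p) \<and>
         (\<forall>p. stationary lam mu K p \<longrightarrow>
              (\<forall>s. p s = (if valid_state K s then p [] * weight lam mu K s else 0)))"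
proof -
  interpret Q lam mu K by unfold_locales (use assms in auto)
  define Z where "Z = (\<Sum>\<^sub>\<infinity>s. w s)"
  have wh: "(w has_sum Z) UNIV" unfolding Z_def using w_summable by simp
  have Z0: "Z \<ge> 0" unfolding Z_def by (rule infsum_nonneg) (rule w_nonneg)
  have Zpos: "Z > 0"
  proof (rule ccontr)
    assume "\<not> Z > 0"
    then have "Z \<le> 0" by simp
    then have "w [] = 0"
      by (intro nonneg_infsum_le_0D[where A = UNIV]) (use w_summable w_nonneg in \<open>auto simp: Z_def\<close>)
    then show False using w_Nil by simp
  qed
  have form: "p s = p [] * w s" if st: "stationary lam mu K p" for p s
  proof (cases "valid_state K s")
    case True then show ?thesis using stationary_form[OF st True] by simp
  next
    case False
    then have "p s = 0" using st unfolding stationary_def by blast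
    then show ?thesis using False by (simp add: w_def)
  qed
  have part2: "\<forall>p. stationary lam mu K p \<longrightarrow>
              (\<forall>s. p s = (if valid_state K s then p [] * weight lam mu K s else 0))"
  proof (intro allI impI)
    fix p s assume st: "stationary lam mu K p"
    show "p s = (if valid_state K s then p [] * weight lam mu K s else 0)"
      using form[OF st, of s] by (simp add: w_def)
  qed
  define p0 where "p0 = (\<lambda>s. w s / Z)"
  have st0: "stationary lam mu K p0"
    unfolding stationary_def
  proof (intro conjI allI impI)
    fix s
    show "0 \<le> p0 s" unfolding p0_def using w_nonneg Z0 by simp
  next
    fix s assume "\<not> valid_state K s"
    then show "p0 s = 0" by (simp add: p0_def w_def)
  next
    have "((\<lambda>s. (1 / Z) * w s) has_sum (1 / Z * Z)) UNIV" by (rule has_sum_cmult_right[OF wh])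
    then show "(p0 has_sum 1) UNIV" using Zpos by (simp add: p0_def)
  next
    fix s assume v: "valid_state K s"
    have "p0 s * (\<Sum>\<^sub>\<infinity>s'\<in>UNIV - {s}. rate lam mu K s s') = (1 / Z) * (w s * outr s)"
      using out_infsum[OF v] by (simp add: p0_def)
    also have "\<dots> = (1 / Z) * (\<Sum>\<^sub>\<infinity>s'\<in>UNIV - {s}. w s' * rate lam mu K s' s)"
      using balance_w[OF v] by simp
    also have "\<dots> = (\<Sum>\<^sub>\<infinity>s'\<in>UNIV - {s}. (1 / Z) * (w s' * rate lam mu K s' s))"
      by (rule infsum_cmult_right'[symmetric])
    also have "\<dots> = (\<Sum>\<^sub>\<infinity>s'\<in>UNIV - {s}. p0 s' * rate lam mu K s' s)"
      by (simp add: p0_def)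
    finally show "p0 s * (\<Sum>\<^sub>\<infinity>s'\<in>UNIV - {s}. rate lam mu K s s') =
        (\<Sum>\<^sub>\<infinity>s'\<in>UNIV - {s}. p0 s' * rate lam mu K s' s)" .
  qed
  have uniq: "p = p0" if st: "stationary lam mu K p" for p
  proof -
    have ph: "(p has_sum 1) UNIV" using st unfolding stationary_def by blast
    have pe: "p = (\<lambda>s. p [] * w s)" using form[OF st] by (rule ext)
    have "((\<lambda>s. p [] * w s) has_sum (p [] * Z)) UNIV" by (rule has_sum_cmult_right[OF wh])
    then have "p [] * Z = 1" using ph pe has_sum_unique by metis
    then have "p [] = 1 / Z" using Zpos by (simp add: field_simps)
    then show ?thesis using pe by (auto simp: p0_def)
  qed
  have "\<exists>!p. stationary lam mu K p" using st0 uniq by blast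
  with part2 show ?thesis by blast
qed


end
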